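(* For each integer $m\ge-1$, the function $\hat r_{-m}(x',\xi)$ can be written as a finite sum of expressions of the form $|\xi|^{-k}p(x',\xi)$, each of total weight $m+1$, and for each summand the total parity, normal parity and $\xi$-parity are well defined and their sum is $0$ modulo $2$. The same holds for $r_{-m}(x,\xi)=-\hat r_{-m}(x,0,\xi)$.
   Context: Let $(\Omega,g)$ be a compact Riemannian manifold of dimension $n$ with smooth boundary $M$. In boundary normal coordinates $x'=(x,x^n)$, $x=(x^1,\dots,x^{n-1})$ ($x^n$ = parameter along inward normal geodesics from $M$), $g=\sum_{\alpha,\beta=1}^{n-1}g_{\alpha\beta}(x')dx^\alpha dx^\beta+(dx^n)^2$; Greek indices run over $1,\dots,n-1$, $\xi=(\xi^1,\dots,\xi^{n-1})$ are dual variables, $D_{x^j}=-i\partial_{x^j}$, $\delta=\det(g_{\alpha\beta})$. Set $E=-\frac12\sum g^{\alpha\beta}\partial_{x^n}g_{\alpha\beta}$, $q_2=\sum g^{\alpha\beta}\xi^\alpha\xi^\beta$, $q_1=-i\sum_{\alpha,\beta}(\frac12g^{\alpha\beta}\partial_{x^\alpha}\log\delta+\partial_{x^\alpha}g^{\alpha\beta})\xi^\beta$, and $|\xi|=\sqrt{q_2}$. Define $\hat r_1=-\sqrt{q_2}$, $\hat r_0=\frac{1}{2\sqrt{q_2}}\big(\sum_\alpha\partial_{\xi^\alpha}\sqrt{q_2}\,D_{x^\alpha}\sqrt{q_2}-q_1-\partial_{x^n}\sqrt{q_2}+E\sqrt{q_2}\big)$, and for $m\ge0$, $\hat r_{-m-1}=\frac{1}{2\sqrt{q_2}}\Big(\sum_{-m\le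 j\le1,\,-m\le k\le1,\,|K|=j+k+m}\frac1{K!}\partial_\xi^K\hat r_j\,D_x^K\hat r_k+\partial_{x^n}\hat r_{-m}-E\hat r_{-m}\Big)$, with $K\in\mathbb N^{n-1}$ multi-indices. (Then $\mathcal D$, the Dirichlet-to-Neumann operator, has full symbol $r_1+r_0+r_{-1}+\dots$ modulo smoothing.) An expression of the form $|\xi|^{-k}p(x',\xi)$ means $k\in\mathbb Z$ and $p$ a polynomial in $\xi$ whose coefficients are polynomials (with constant complex coefficients) in $g_{\alpha\beta}$, $g^{\alpha\beta}$ and their partial derivatives in $x'$. Its total (resp. normal) weight is $w$ if every monomial in $p$ contains exactly $w$ derivatives (resp. $w$ derivatives in $x^n$); its total (resp. normal) parity is $1$ if every monomial has odd total (resp. normal) weight and $0$ if every monomial has even one; its $\xi$-parity is $0$ if $p$ is even in $\xi$ and $1$ if odd. *)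

theory Defs
  imports "HOL-Analysis.Analysis"
begin

text \<open>Local boundary normal coordinates x' = (x, x^n) with x in R^(n-1).
  The tangential index set is a finite linearly ordered type 'n (n - 1 = CARD('n));
  the normal coordinate is the second component of the pair.\<close>

type_synonym 'n pt = "(real^'n) \<times> real"
type_synonym 'n sym = "'n pt \<Rightarrow> real^'n \<Rightarrow> complex"
type_synonym 'n metric = "'n \<Rightarrow> 'n \<Rightarrow> 'n pt \<Rightarrow> real"

definition dvec :: "('n::finite) option \<Rightarrow> 'n pt" where
  "dvec d = (case d of Some \<alpha> \<Rightarrow> (axis \<alpha> 1, 0) | None \<Rightarrow> (0, 1))"

definition dd :: "('n::finite) option \<Rightarrow> ('n pt \<Rightarrow> 'b::real_normed_vector) \<Rightarrow> 'n pt \<Rightarrow> 'b" where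
  "dd d f p = vector_derivative (\<lambda>s. f (p + s *\<^sub>R dvec d)) (at 0)"

definition iterd :: "('n::finite) option list \<Rightarrow> ('n pt \<Rightarrow> 'b::real_normed_vector) \<Rightarrow> 'n pt \<Rightarrow> 'b" where
  "iterd ds f = fold dd ds f"

definition smooth_on_pt :: "('n::finite) pt set \<Rightarrow> ('n pt \<Rightarrow> real) \<Rightarrow> bool" where
  "smooth_on_pt U h \<longleftrightarrow> (\<forall>ds. \<forall>p\<in>U. iterd ds h differentiable (at p))"

text \<open>Tangential block g_{alpha beta} of a Riemannian metric in boundary normal coordinates
  g = sum g_{alpha beta} dx^alpha dx^beta + (dx^n)^2, on an open coordinate set U.\<close>
definition tang_metric :: "('n::finite) pt set \<Rightarrow> 'n metric \<Rightarrow> bool" where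
  "tang_metric U g \<longleftrightarrow> open U \<and> (\<forall>\<alpha> \<beta>. smooth_on_pt U (g \<alpha> \<beta>))
     \<and> (\<forall>\<alpha> \<beta>. \<forall>p\<in>U. g \<alpha> \<beta> p = g \<beta> \<alpha> p)
     \<and> (\<forall>p\<in>U. \<forall>v::real^'n. v \<noteq> 0 \<longrightarrow> (\<Sum>\<alpha>\<in>UNIV. \<Sum>\<beta>\<in>UNIV. g \<alpha> \<beta> p * v$\<alpha> * v$\<beta>) > 0)"

definition gmat :: "('n::finite) metric \<Rightarrow> 'n pt \<Rightarrow> real^'n^'n" where
  "gmat g p = (\<chi> \<alpha> \<beta>. g \<alpha> \<beta> p)"

definition ginv :: "('n::finite) metric \<Rightarrow> 'n metric" where
  "ginv g \<alpha> \<beta> p = matrix_inv (gmat g p) $ \<alpha> $ \<beta>"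

definition gdet :: "('n::finite) metric \<Rightarrow> 'n pt \<Rightarrow> real" where
  "gdet g p = det (gmat g p)"

definition pdx :: "('n::finite) \<Rightarrow> 'n sym \<Rightarrow> 'n sym" where
  "pdx \<alpha> f = (\<lambda>p \<xi>. dd (Some \<alpha>) (\<lambda>q. f q \<xi>) p)"

definition pdn :: "('n::finite) sym \<Rightarrow> 'n sym" where
  "pdn f = (\<lambda>p \<xi>. dd None (\<lambda>q. f q \<xi>) p)"

definition pdxi :: "('n::finite) \<Rightarrow> 'n sym \<Rightarrow> 'n sym" where
  "pdxi \<alpha> f = (\<lambda>p \<xi>. vector_derivative (\<lambda>s. f p (\<xi> + s *\<^sub>R axis \<alpha> 1)) (at 0))"

definition Dx :: "('n::finite) \<Rightarrow> 'n sym \<Rightarrow> 'n sym" where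
  "Dx \<alpha> f = (\<lambda>p \<xi>. - \<i> * pdx \<alpha> f p \<xi>)"

definition mi_list :: "('n::{finite,linorder} \<Rightarrow> nat) \<Rightarrow> 'n list" where
  "mi_list K = concat (map (\<lambda>\<alpha>. replicate (K \<alpha>) \<alpha>) (sorted_list_of_set (UNIV :: 'n set)))"

definition mi_abs :: "('n::finite \<Rightarrow> nat) \<Rightarrow> nat" where
  "mi_abs K = (\<Sum>\<alpha>\<in>UNIV. K \<alpha>)"

definition mi_fact :: "('n::finite \<Rightarrow> nat) \<Rightarrow> nat" where
  "mi_fact K = (\<Prod>\<alpha>\<in>UNIV. fact (K \<alpha>))"

definition pdxi_K :: "('n::{finite,linorder} \<Rightarrow> nat) \<Rightarrow> 'n sym \<Rightarrow> 'n sym" where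
  "pdxi_K K f = fold pdxi (mi_list K) f"

definition Dx_K :: "('n::{finite,linorder} \<Rightarrow> nat) \<Rightarrow> 'n sym \<Rightarrow> 'n sym" where
  "Dx_K K f = fold Dx (mi_list K) f"

definition q2 :: "('n::finite) metric \<Rightarrow> 'n pt \<Rightarrow> real^'n \<Rightarrow> real" where
  "q2 g p \<xi> = (\<Sum>\<alpha>\<in>UNIV. \<Sum>\<beta>\<in>UNIV. ginv g \<alpha> \<beta> p * \<xi>$\<alpha> * \<xi>$\<beta>)"

definition sq :: "('n::finite) metric \<Rightarrow> 'n sym" where
  "sq g = (\<lambda>p \<xi>. complex_of_real (sqrt (q2 g p \<xi>)))"

definition Efun :: "('n::finite) metric \<Rightarrow> 'n pt \<Rightarrow> real" where
  "Efun g p = - (1/2) * (\<Sum>\<alpha>\<in>UNIV. \<Sum>\<beta>\<in>UNIV. ginv g \<alpha> \<beta> p * dd None (g \<alpha> \<beta>) p)"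

definition q1 :: "('n::finite) metric \<Rightarrow> 'n sym" where
  "q1 g = (\<lambda>p \<xi>. - \<i> * (\<Sum>\<alpha>\<in>UNIV. \<Sum>\<beta>\<in>UNIV.
      complex_of_real (((1/2) * ginv g \<alpha> \<beta> p * dd (Some \<alpha>) (\<lambda>q. ln (gdet g q)) p
                        + dd (Some \<alpha>) (ginv g \<alpha> \<beta>) p) * \<xi>$\<beta>)))"

definition r1 :: "('n::finite) metric \<Rightarrow> 'n sym" where
  "r1 g = (\<lambda>p \<xi>. - sq g p \<xi>)"

definition r0 :: "('n::finite) metric \<Rightarrow> 'n sym" where
  "r0 g = (\<lambda>p \<xi>. (1 / (2 * sq g p \<xi>)) *
     ((\<Sum>\<alpha>\<in>UNIV. pdxi \<alpha> (sq g) p \<xi> * Dx \<alpha> (sq g) p \<xi>) - q1 g p \<xi>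
      - pdn (sq g) p \<xi> + complex_of_real (Efun g p) * sq g p \<xi>))"

text \<open>Recursion step: given L with L ! i = hat r_{1-i} for i <= m+1, compute hat r_{-m-1}.\<close>
definition rstep :: "('n::{finite,linorder}) metric \<Rightarrow> nat \<Rightarrow> 'n sym list \<Rightarrow> 'n sym" where
  "rstep g m L = (\<lambda>p \<xi>. (1 / (2 * sq g p \<xi>)) *
     ((\<Sum>j\<in>{- int m..1}. \<Sum>k\<in>{- int m..1}. \<Sum>K\<in>{K :: 'n \<Rightarrow> nat. int (mi_abs K) = j + k + int m}.
         (1 / of_nat (mi_fact K)) * pdxi_K K (L ! nat (1 - j)) p \<xi> * Dx_K K (L ! nat (1 - k)) p \<xi>)
      + pdn (L ! (m + 1)) p \<xi> - complex_of_real (Efun g p) * (L ! (m + 1)) p \<xi>))"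

fun rlist :: "('n::{finite,linorder}) metric \<Rightarrow> nat \<Rightarrow> 'n sym list" where
  "rlist g 0 = [r1 g]"
| "rlist g (Suc 0) = [r1 g, r0 g]"
| "rlist g (Suc (Suc m)) = rlist g (Suc m) @ [rstep g m (rlist g (Suc m))]"

definition rhat :: "('n::{finite,linorder}) metric \<Rightarrow> int \<Rightarrow> 'n sym" where
  "rhat g j = rlist g (nat (1 - j)) ! nat (1 - j)"

text \<open>An atom (u, alpha, beta, K, d) stands for
  d_x^K d_{x^n}^d g_{alpha beta} (u = False) or d_x^K d_{x^n}^d g^{alpha beta} (u = True).
  A monomial (c, atoms, e) stands for c * prod atoms * xi^e (c a complex constant).
  A term (k, P) stands for |xi|^{-k} * (sum of the monomials in P).\<close>
type_synonym 'n atm = "bool \<times> 'n \<times> 'n \<times> ('n \<Rightarrow> nat) \<times> nat"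
type_synonym 'n mnm = "complex \<times> 'n atm list \<times> ('n \<Rightarrow> nat)"
type_synonym 'n trm = "int \<times> 'n mnm list"

fun atm_val :: "('n::{finite,linorder}) metric \<Rightarrow> 'n atm \<Rightarrow> 'n pt \<Rightarrow> real" where
  "atm_val g (u, \<alpha>, \<beta>, K, d) p =
     iterd (map Some (mi_list K) @ replicate d None) (if u then ginv g \<alpha> \<beta> else g \<alpha> \<beta>) p"

fun mnm_val :: "('n::{finite,linorder}) metric \<Rightarrow> 'n mnm \<Rightarrow> 'n sym" where
  "mnm_val g (c, as, e) p \<xi> =
     c * complex_of_real ((\<Prod>a\<leftarrow>as. atm_val g a p) * (\<Prod>\<alpha>\<in>UNIV. (\<xi>$\<alpha>) ^ (e \<alpha>)))"

fun trm_val :: "('n::{finite,linorder}) metric \<Rightarrow> 'n trm \<Rightarrow> 'n sym" where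
  "trm_val g (k, P) p \<xi> =
     complex_of_real (sqrt (q2 g p \<xi>) powi (- k)) * (\<Sum>M\<leftarrow>P. mnm_val g M p \<xi>)"

definition rep_val :: "('n::{finite,linorder}) metric \<Rightarrow> 'n trm list \<Rightarrow> 'n sym" where
  "rep_val g R p \<xi> = (\<Sum>t\<leftarrow>R. trm_val g t p \<xi>)"

fun atm_w :: "('n::finite) atm \<Rightarrow> nat" where
  "atm_w (u, \<alpha>, \<beta>, K, d) = mi_abs K + d"

fun atm_nw :: "'n atm \<Rightarrow> nat" where
  "atm_nw (u, \<alpha>, \<beta>, K, d) = d"

fun mnm_w :: "('n::finite) mnm \<Rightarrow> nat" where
  "mnm_w (c, as, e) = sum_list (map atm_w as)"

fun mnm_nw :: "'n mnm \<Rightarrow> nat" where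
  "mnm_nw (c, as, e) = sum_list (map atm_nw as)"

fun mnm_deg :: "('n::finite) mnm \<Rightarrow> nat" where
  "mnm_deg (c, as, e) = mi_abs e"

fun graded_trm :: "int \<Rightarrow> ('n::finite) trm \<Rightarrow> bool" where
  "graded_trm w (k, P) \<longleftrightarrow>
     (\<forall>M\<in>set P. int (mnm_w M) = w) \<and>
     (\<exists>tp np xp :: nat. (\<forall>M\<in>set P. mnm_w M mod 2 = tp \<and> mnm_nw M mod 2 = np \<and> mnm_deg M mod 2 = xp)
                        \<and> even (tp + np + xp))"

end

theory Submission
  imports Defs
begin


lemma line_vd:
  assumes "(f has_derivative f') (at (q + s0 *\<^sub>R v))"
  shows "((\<lambda>s. f (q + s *\<^sub>R v)) has_vector_derivative f' v) (at s0)"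
proof -
  have l: "((\<lambda>s. q + s *\<^sub>R v) has_derivative (\<lambda>s. s *\<^sub>R v)) (at s0)"
    by (auto intro!: derivative_eq_intros)
  have "((\<lambda>s. f (q + s *\<^sub>R v)) has_derivative (\<lambda>s. f' (s *\<^sub>R v))) (at s0)"
    using has_derivative_compose[OF l assms] .
  moreover have "linear f'" using assms has_derivative_linear by blast
  ultimately show ?thesis unfolding has_vector_derivative_def
    by (simp add: linear_cmul)
qed

lemma dd_eq:
  assumes "(f has_derivative f') (at p)"
  shows "dd d f p = f' (dvec d)"
proof -
  have "((\<lambda>s. f (p + s *\<^sub>R dvec d)) has_vector_derivative f' (dvec d)) (at 0)"
    using line_vd[of f f' p 0] assms by simp
  then show ?thesis unfolding dd_def by (rule vector_derivative_at)
qed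

lemma dd_line:
  assumes "f differentiable (at (q + s *\<^sub>R dvec d))"
  shows "((\<lambda>s. f (q + s *\<^sub>R dvec d)) has_vector_derivative dd d f (q + s *\<^sub>R dvec d)) (at s)"
proof -
  obtain f' where f': "(f has_derivative f') (at (q + s *\<^sub>R dvec d))"
    using assms differentiable_def by blast
  show ?thesis using line_vd[OF f'] dd_eq[OF f'] by simp
qed

lemma dd_line_real:
  fixes f :: "'n::finite pt \<Rightarrow> real"
  assumes "f differentiable (at (q + s *\<^sub>R dvec d))"
  shows "((\<lambda>s. f (q + s *\<^sub>R dvec d)) has_real_derivative dd d f (q + s *\<^sub>R dvec d)) (at s)"
  using dd_line[OF assms] by (simp add: has_real_derivative_iff_has_vector_derivative)

lemma norm_dvec: "norm (dvec d :: 'n::finite pt) \<le> 1"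
  by (cases d) (auto simp: dvec_def intro: order.trans[OF norm_Pair_le])

lemma ev_line:
  fixes p :: "'a::real_normed_vector"
  assumes "open S" "p \<in> S"
  shows "eventually (\<lambda>s. p + s *\<^sub>R v \<in> S) (nhds (0::real))"
proof -
  obtain e where e: "e > 0" "ball p e \<subseteq> S" using assms open_contains_ball by blast
  have "\<forall>s. dist s 0 < e / (norm v + 1) \<longrightarrow> p + s *\<^sub>R v \<in> S"
  proof (intro allI impI)
    fix s :: real assume "dist s 0 < e / (norm v + 1)"
    then have "\<bar>s\<bar> * (norm v + 1) < e"
      using pos_less_divide_eq[of "norm v + 1" "\<bar>s\<bar>" e] add_nonneg_pos[OF norm_ge_zero[of v] zero_less_one] by simp
    then have "\<bar>s\<bar> * norm v < e"
      by (smt (verit) abs_ge_zero mult_nonneg_nonneg norm_ge_zero distrib_left mult.commute)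
    then have "p + s *\<^sub>R v \<in> ball p e" by (simp add: dist_norm)
    then show "p + s *\<^sub>R v \<in> S" using e by blast
  qed
  moreover have "e / (norm v + 1) > 0" using e add_nonneg_pos[OF norm_ge_zero[of v] zero_less_one] by simp
  ultimately show ?thesis unfolding eventually_nhds_metric by blast
qed

lemma dd_local:
  assumes "open S" "p \<in> S" "\<And>q. q \<in> S \<Longrightarrow> f q = h q"
  shows "dd d f p = dd d h p"
  unfolding dd_def
proof (rule vector_derivative_cong_eq)
  show "\<forall>\<^sub>F x in nhds 0. x \<in> UNIV \<longrightarrow> f (p + x *\<^sub>R dvec d) = h (p + x *\<^sub>R dvec d)"
    using ev_line[OF assms(1,2), of "dvec d"] by eventually_elim (simp add: assms(3))
qed auto

lemma iterd_Cons: "iterd (d # ds) h = iterd ds (dd d h)"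
  by (simp add: iterd_def)

lemma iterd_Nil: "iterd [] h = h"
  by (simp add: iterd_def)

lemma iterd_append: "iterd (ds @ ds') h = iterd ds' (iterd ds h)"
  by (simp add: iterd_def)

lemma iterd_local:
  assumes "open S" "\<forall>q\<in>S. f q = h q"
  shows "\<forall>q\<in>S. iterd ds f q = iterd ds h q"
  using assms(2)
proof (induction ds arbitrary: f h)
  case Nil then show ?case by (simp add: iterd_Nil)
next
  case (Cons d ds)
  have "\<forall>q\<in>S. dd d f q = dd d h q"
    using dd_local[OF assms(1)] Cons.prems by blast
  then show ?case using Cons.IH by (simp add: iterd_Cons)
qed

lemma smooth_iterd: "smooth_on_pt U h \<Longrightarrow> smooth_on_pt U (iterd ds h)"
  unfolding smooth_on_pt_def by (metis iterd_append)

lemma smooth_dd: "smooth_on_pt U h \<Longrightarrow> smooth_on_pt U (dd d h)"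
  using smooth_iterd[of U h "[d]"] by (simp add: iterd_Cons iterd_Nil)

lemma smooth_diff: "smooth_on_pt U h \<Longrightarrow> p \<in> U \<Longrightarrow> h differentiable (at p)"
  unfolding smooth_on_pt_def by (metis iterd_Nil)

lemma smooth_coinduct:
  assumes U: "open U"
  and A: "\<And>h. h \<in> A \<Longrightarrow> (\<forall>p\<in>U. h differentiable (at p)) \<and> (\<forall>d. \<exists>h'\<in>A. \<forall>p\<in>U. dd d h p = h' p)"
  and h: "h \<in> A"
  shows "smooth_on_pt U h"
proof -
  have claim: "\<forall>h\<in>A. \<exists>h'\<in>A. \<forall>p\<in>U. iterd ds h p = h' p" for ds
  proof (induction ds)
    case Nil then show ?case by (auto simp: iterd_Nil)
  next
    case (Cons d ds)
    show ?case
    proof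
      fix h assume "h \<in> A"
      then obtain h1 where h1: "h1 \<in> A" "\<forall>p\<in>U. dd d h p = h1 p" using A by blast
      then obtain h2 where h2: "h2 \<in> A" "\<forall>p\<in>U. iterd ds h1 p = h2 p" using Cons.IH by blast
      have "\<forall>p\<in>U. iterd ds (dd d h) p = iterd ds h1 p" using iterd_local[OF U h1(2)] .
      then show "\<exists>h'\<in>A. \<forall>p\<in>U. iterd (d # ds) h p = h' p"
        using h2 by (auto simp: iterd_Cons)
    qed
  qed
  show ?thesis unfolding smooth_on_pt_def
  proof (intro allI ballI)
    fix ds p assume p: "p \<in> U"
    obtain h' where h': "h' \<in> A" "\<forall>p\<in>U. iterd ds h p = h' p" using claim h by blast
    then obtain f' where "(h' has_derivative f') (at p)"
      using A p differentiable_def by blast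
    then have "(iterd ds h has_derivative f') (at p)"
      by (rule has_derivative_transform_within_open[OF _ U p]) (use h' in auto)
    then show "iterd ds h differentiable (at p)" unfolding differentiable_def by blast
  qed
qed

lemma dd_line_at:
  fixes h :: "'n::finite pt \<Rightarrow> real"
  assumes "h differentiable (at (p + s *\<^sub>R dvec a + c *\<^sub>R w))"
  shows "((\<lambda>s. h (p + s *\<^sub>R dvec a + c *\<^sub>R w)) has_real_derivative dd a h (p + s *\<^sub>R dvec a + c *\<^sub>R w)) (at s)"
proof -
  have e: "\<And>s. p + s *\<^sub>R dvec a + c *\<^sub>R w = (p + c *\<^sub>R w) + s *\<^sub>R dvec a" by (simp add: algebra_simps)
  show ?thesis using dd_line_real[of h "p + c *\<^sub>R w" s a] assms by (simp add: e)
qed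

lemma schwarz:
  fixes h :: "'n::finite pt \<Rightarrow> real"
  assumes U: "open U" and sm: "smooth_on_pt U h" and p: "p \<in> U"
  shows "dd b (dd a h) p = dd a (dd b h) p"
proof (rule ccontr)
  define u where "u = (dvec a :: 'n pt)"
  define v where "v = (dvec b :: 'n pt)"
  define D1 where "D1 = dd b (dd a h)"
  define D2 where "D2 = dd a (dd b h)"
  assume ne: "dd b (dd a h) p \<noteq> dd a (dd b h) p"
  define e where "e = abs (D1 p - D2 p) / 2"
  have e0: "e > 0" using ne by (simp add: e_def D1_def D2_def)
  have sm1: "smooth_on_pt U (dd a h)" "smooth_on_pt U (dd b h)" using smooth_dd sm by auto
  have c1: "continuous (at p) D1" unfolding D1_def
    using smooth_diff[OF smooth_dd[OF sm1(1)] p] differentiable_imp_continuous_within by blast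
  have c2: "continuous (at p) D2" unfolding D2_def
    using smooth_diff[OF smooth_dd[OF sm1(2)] p] differentiable_imp_continuous_within by blast
  obtain d1 where d1: "d1 > 0" "\<forall>x. dist x p < d1 \<longrightarrow> dist (D1 x) (D1 p) < e"
    using c1 e0 unfolding continuous_at_eps_delta by blast
  obtain d2 where d2: "d2 > 0" "\<forall>x. dist x p < d2 \<longrightarrow> dist (D2 x) (D2 p) < e"
    using c2 e0 unfolding continuous_at_eps_delta by blast
  obtain r where r: "r > 0" "ball p r \<subseteq> U" using U p open_contains_ball by blast
  define t where "t = min r (min d1 d2) / 3"
  have t0: "t > 0" using r d1 d2 by (simp add: t_def)
  have tr: "2*t < r" "2*t < d1" "2*t < d2" using r d1 d2 by (auto simp: t_def)
  have close: "dist (p + s *\<^sub>R u + \<tau> *\<^sub>R v) p \<le> 2*t"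
    if "0 \<le> s" "s \<le> t" "0 \<le> \<tau>" "\<tau> \<le> t" for s \<tau>
  proof -
    have "dist (p + s *\<^sub>R u + \<tau> *\<^sub>R v) p = norm (s *\<^sub>R u + \<tau> *\<^sub>R v)" by (simp add: dist_norm)
    also have "\<dots> \<le> norm (s *\<^sub>R u) + norm (\<tau> *\<^sub>R v)" by (rule norm_triangle_ineq)
    also have "\<dots> = s * norm u + \<tau> * norm v" using that by simp
    also have "\<dots> \<le> s * 1 + \<tau> * 1"
      using norm_dvec[of a] norm_dvec[of b] that unfolding u_def v_def
      by (intro add_mono mult_left_mono) auto
    finally show ?thesis using that by simp
  qed
  have inU: "p + s *\<^sub>R u + \<tau> *\<^sub>R v \<in> U"
    if "0 \<le> s" "s \<le> t" "0 \<le> \<tau>" "\<tau> \<le> t" for s \<tau>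
  proof -
    have "dist p (p + s *\<^sub>R u + \<tau> *\<^sub>R v) < r" using close[OF that] tr by (simp add: dist_commute)
    then show ?thesis using r by auto
  qed
  define \<Delta> where "\<Delta> = (h (p + t *\<^sub>R u + t *\<^sub>R v) - h (p + t *\<^sub>R u + 0 *\<^sub>R v))
                      - (h (p + 0 *\<^sub>R u + t *\<^sub>R v) - h (p + 0 *\<^sub>R u + 0 *\<^sub>R v))"
  have "\<exists>z. 0 < z \<and> z < t \<and>
     (\<lambda>s. h (p + s *\<^sub>R u + t *\<^sub>R v) - h (p + s *\<^sub>R u + 0 *\<^sub>R v)) t
   - (\<lambda>s. h (p + s *\<^sub>R u + t *\<^sub>R v) - h (p + s *\<^sub>R u + 0 *\<^sub>R v)) 0
   = (t - 0) * (\<lambda>s. dd a h (p + s *\<^sub>R u + t *\<^sub>R v) - dd a h (p + s *\<^sub>R u + 0 *\<^sub>R v)) z"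
  proof (rule MVT2[OF t0])
    fix x assume x: "0 \<le> x" "x \<le> t"
    show "((\<lambda>s. h (p + s *\<^sub>R u + t *\<^sub>R v) - h (p + s *\<^sub>R u + 0 *\<^sub>R v)) has_real_derivative
           dd a h (p + x *\<^sub>R u + t *\<^sub>R v) - dd a h (p + x *\<^sub>R u + 0 *\<^sub>R v)) (at x)"
      unfolding u_def
      by (intro DERIV_diff dd_line_at smooth_diff[OF sm] inU[unfolded u_def] x) (use t0 in auto)
  qed
  then obtain \<sigma> where \<sigma>: "0 < \<sigma>" "\<sigma> < t"
    and eq1: "\<Delta> = t * (dd a h (p + \<sigma> *\<^sub>R u + t *\<^sub>R v) - dd a h (p + \<sigma> *\<^sub>R u + 0 *\<^sub>R v))"
    by (auto simp: \<Delta>_def)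
  have "\<exists>z. 0 < z \<and> z < t \<and>
     (\<lambda>\<tau>. dd a h (p + \<sigma> *\<^sub>R u + \<tau> *\<^sub>R v)) t - (\<lambda>\<tau>. dd a h (p + \<sigma> *\<^sub>R u + \<tau> *\<^sub>R v)) 0
   = (t - 0) * (\<lambda>\<tau>. D1 (p + \<sigma> *\<^sub>R u + \<tau> *\<^sub>R v)) z"
  proof (rule MVT2[OF t0])
    fix x assume x: "0 \<le> x" "x \<le> t"
    show "((\<lambda>\<tau>. dd a h (p + \<sigma> *\<^sub>R u + \<tau> *\<^sub>R v)) has_real_derivative D1 (p + \<sigma> *\<^sub>R u + x *\<^sub>R v)) (at x)"
      unfolding D1_def v_def
      by (intro dd_line_real smooth_diff[OF sm1(1)] inU[unfolded v_def] x) (use \<sigma> in auto)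
  qed
  then obtain \<tau> where \<tau>: "0 < \<tau>" "\<tau> < t"
    and eq2: "dd a h (p + \<sigma> *\<^sub>R u + t *\<^sub>R v) - dd a h (p + \<sigma> *\<^sub>R u + 0 *\<^sub>R v) = t * D1 (p + \<sigma> *\<^sub>R u + \<tau> *\<^sub>R v)"
    by auto
  have "\<exists>z. 0 < z \<and> z < t \<and>
     (\<lambda>\<tau>. h (p + t *\<^sub>R u + \<tau> *\<^sub>R v) - h (p + 0 *\<^sub>R u + \<tau> *\<^sub>R v)) t
   - (\<lambda>\<tau>. h (p + t *\<^sub>R u + \<tau> *\<^sub>R v) - h (p + 0 *\<^sub>R u + \<tau> *\<^sub>R v)) 0
   = (t - 0) * (\<lambda>\<tau>. dd b h (p + t *\<^sub>R u + \<tau> *\<^sub>R v) - dd b h (p + 0 *\<^sub>R u + \<tau> *\<^sub>R v)) z"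
  proof (rule MVT2[OF t0])
    fix x assume x: "0 \<le> x" "x \<le> t"
    show "((\<lambda>\<tau>. h (p + t *\<^sub>R u + \<tau> *\<^sub>R v) - h (p + 0 *\<^sub>R u + \<tau> *\<^sub>R v)) has_real_derivative
           dd b h (p + t *\<^sub>R u + x *\<^sub>R v) - dd b h (p + 0 *\<^sub>R u + x *\<^sub>R v)) (at x)"
      unfolding v_def
      by (intro DERIV_diff dd_line_real smooth_diff[OF sm] inU[unfolded v_def] x) (use t0 in auto)
  qed
  then obtain \<tau>' where \<tau>': "0 < \<tau>'" "\<tau>' < t"
    and eq3: "\<Delta> = t * (dd b h (p + t *\<^sub>R u + \<tau>' *\<^sub>R v) - dd b h (p + 0 *\<^sub>R u + \<tau>' *\<^sub>R v))"
    by (auto simp: \<Delta>_def algebra_simps)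
  have "\<exists>z. 0 < z \<and> z < t \<and>
     (\<lambda>s. dd b h (p + s *\<^sub>R u + \<tau>' *\<^sub>R v)) t - (\<lambda>s. dd b h (p + s *\<^sub>R u + \<tau>' *\<^sub>R v)) 0
   = (t - 0) * (\<lambda>s. D2 (p + s *\<^sub>R u + \<tau>' *\<^sub>R v)) z"
  proof (rule MVT2[OF t0])
    fix x assume x: "0 \<le> x" "x \<le> t"
    show "((\<lambda>s. dd b h (p + s *\<^sub>R u + \<tau>' *\<^sub>R v)) has_real_derivative D2 (p + x *\<^sub>R u + \<tau>' *\<^sub>R v)) (at x)"
      unfolding D2_def u_def
      by (intro dd_line_at smooth_diff[OF sm1(2)] inU[unfolded u_def] x) (use \<tau>' in auto)
  qed
  then obtain \<sigma>' where \<sigma>': "0 < \<sigma>'" "\<sigma>' < t"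
    and eq4: "dd b h (p + t *\<^sub>R u + \<tau>' *\<^sub>R v) - dd b h (p + 0 *\<^sub>R u + \<tau>' *\<^sub>R v) = t * D2 (p + \<sigma>' *\<^sub>R u + \<tau>' *\<^sub>R v)"
    by auto
  have "t * (t * D1 (p + \<sigma> *\<^sub>R u + \<tau> *\<^sub>R v)) = t * (t * D2 (p + \<sigma>' *\<^sub>R u + \<tau>' *\<^sub>R v))"
    using eq1 eq2 eq3 eq4 by (metis (no_types, lifting))
  then have eqD: "D1 (p + \<sigma> *\<^sub>R u + \<tau> *\<^sub>R v) = D2 (p + \<sigma>' *\<^sub>R u + \<tau>' *\<^sub>R v)"
    using t0 by simp
  have "dist (p + \<sigma> *\<^sub>R u + \<tau> *\<^sub>R v) p < d1"
    using close[of \<sigma> \<tau>] \<sigma> \<tau> tr by auto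
  then have A: "dist (D1 (p + \<sigma> *\<^sub>R u + \<tau> *\<^sub>R v)) (D1 p) < e" using d1 by blast
  have "dist (p + \<sigma>' *\<^sub>R u + \<tau>' *\<^sub>R v) p < d2"
    using close[of \<sigma>' \<tau>'] \<sigma>' \<tau>' tr by auto
  then have B: "dist (D2 (p + \<sigma>' *\<^sub>R u + \<tau>' *\<^sub>R v)) (D2 p) < e" using d2 by blast
  have "abs (D1 p - D2 p) < 2 * e" using A B eqD by (simp add: dist_real_def)
  then show False by (simp add: e_def)
qed

lemma swap_front:
  assumes U: "open U" and sm: "smooth_on_pt U h"
  shows "\<forall>q\<in>U. iterd (a # b # ys) h q = iterd (b # a # ys) h q"
proof -
  have "\<forall>q\<in>U. dd b (dd a h) q = dd a (dd b h) q" using schwarz[OF U sm] by blast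
  then show ?thesis using iterd_local[OF U] by (simp add: iterd_Cons)
qed

lemma iterd_move:
  assumes U: "open U" and sm: "smooth_on_pt U h"
  shows "\<forall>q\<in>U. iterd (xs @ a # ys) h q = iterd (a # xs @ ys) h q"
  using sm
proof (induction xs arbitrary: h)
  case Nil then show ?case by simp
next
  case (Cons x xs)
  have "\<forall>q\<in>U. iterd (xs @ a # ys) (dd x h) q = iterd (a # xs @ ys) (dd x h) q"
    using Cons.IH smooth_dd[OF Cons.prems] by blast
  moreover have "\<forall>q\<in>U. iterd (x # a # xs @ ys) h q = iterd (a # x # xs @ ys) h q"
    using swap_front[OF U Cons.prems] by blast
  ultimately show ?case by (simp add: iterd_Cons)
qed

lemma iterd_perm:
  assumes U: "open U" and sm: "smooth_on_pt U h" and m: "mset ds = mset ds'"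
  shows "\<forall>q\<in>U. iterd ds h q = iterd ds' h q"
  using sm m
proof (induction ds arbitrary: ds' h)
  case Nil then show ?case by simp
next
  case (Cons a ds)
  have "a \<in> set ds'" using Cons.prems(2) by (metis list.set_intros(1) set_mset_mset)
  then obtain xs ys where ds': "ds' = xs @ a # ys" by (meson split_list)
  have "mset ds = mset (xs @ ys)" using Cons.prems(2) ds' by simp
  then have "\<forall>q\<in>U. iterd ds (dd a h) q = iterd (xs @ ys) (dd a h) q"
    using Cons.IH smooth_dd[OF Cons.prems(1)] by blast
  moreover have "\<forall>q\<in>U. iterd (xs @ a # ys) h q = iterd (a # xs @ ys) h q"
    using iterd_move[OF U Cons.prems(1)] by blast
  ultimately show ?case using ds' by (simp add: iterd_Cons)
qed


section \<open>dd calculus rules\<close>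

lemma dd_eq': "(f has_derivative f') (at p) \<Longrightarrow> f' (dvec d) = dd d f p"
  by (simp add: dd_eq)

lemma dd_mult:
  fixes f h :: "'n::finite pt \<Rightarrow> 'b::real_normed_algebra"
  assumes "f differentiable (at p)" "h differentiable (at p)"
  shows "dd d (\<lambda>q. f q * h q) p = f p * dd d h p + dd d f p * h p"
proof -
  obtain f' h' where f': "(f has_derivative f') (at p)" and h': "(h has_derivative h') (at p)"
    using assms differentiable_def by blast
  have "((\<lambda>q. f q * h q) has_derivative (\<lambda>y. f p * h' y + f' y * h p)) (at p)"
    using has_derivative_mult[OF f' h'] .
  from dd_eq[OF this] show ?thesis by (simp add: dd_eq[OF f'] dd_eq[OF h'])
qed

lemma dd_add:
  fixes f h :: "'n::finite pt \<Rightarrow> 'b::real_normed_vector"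
  assumes "f differentiable (at p)" "h differentiable (at p)"
  shows "dd d (\<lambda>q. f q + h q) p = dd d f p + dd d h p"
proof -
  obtain f' h' where f': "(f has_derivative f') (at p)" and h': "(h has_derivative h') (at p)"
    using assms differentiable_def by blast
  from dd_eq[OF has_derivative_add[OF f' h']] show ?thesis by (simp add: dd_eq[OF f'] dd_eq[OF h'])
qed

lemma dd_diff:
  fixes f h :: "'n::finite pt \<Rightarrow> 'b::real_normed_vector"
  assumes "f differentiable (at p)" "h differentiable (at p)"
  shows "dd d (\<lambda>q. f q - h q) p = dd d f p - dd d h p"
proof -
  obtain f' h' where f': "(f has_derivative f') (at p)" and h': "(h has_derivative h') (at p)"
    using assms differentiable_def by blast
  from dd_eq[OF has_derivative_diff[OF f' h']] show ?thesis by (simp add: dd_eq[OF f'] dd_eq[OF h'])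
qed

lemma dd_const: "dd d (\<lambda>q. c) p = 0"
  using dd_eq[of "\<lambda>q. c" "\<lambda>_. 0" p d] by simp

lemma dd_sum:
  fixes f :: "'i \<Rightarrow> 'n::finite pt \<Rightarrow> 'b::real_normed_vector"
  assumes "finite S" "\<And>i. i \<in> S \<Longrightarrow> f i differentiable (at p)"
  shows "dd d (\<lambda>q. \<Sum>i\<in>S. f i q) p = (\<Sum>i\<in>S. dd d (f i) p)"
proof -
  have "\<forall>i\<in>S. \<exists>D. (f i has_derivative D) (at p)" using assms(2) differentiable_def by blast
  then obtain f' where f': "\<And>i. i \<in> S \<Longrightarrow> (f i has_derivative f' i) (at p)"
    using bchoice by metis
  have "((\<lambda>q. \<Sum>i\<in>S. f i q) has_derivative (\<lambda>y. \<Sum>i\<in>S. f' i y)) (at p)"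
    by (rule has_derivative_sum) (use f' in auto)
  then have "dd d (\<lambda>q. \<Sum>i\<in>S. f i q) p = (\<Sum>i\<in>S. f' i (dvec d))" by (rule dd_eq)
  also have "\<dots> = (\<Sum>i\<in>S. dd d (f i) p)" using f' by (intro sum.cong refl) (simp add: dd_eq')
  finally show ?thesis .
qed

lemma dd_prod:
  fixes f :: "'i \<Rightarrow> 'n::finite pt \<Rightarrow> real"
  assumes "finite S" "\<And>i. i \<in> S \<Longrightarrow> f i differentiable (at p)"
  shows "dd d (\<lambda>q. \<Prod>i\<in>S. f i q) p = (\<Sum>i\<in>S. dd d (f i) p * (\<Prod>j\<in>S - {i}. f j p))"
    and "(\<lambda>q. \<Prod>i\<in>S. f i q) differentiable (at p)"
proof -
  have "\<forall>i\<in>S. \<exists>D. (f i has_derivative D) (at p)" using assms(2) differentiable_def by blast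
  then obtain f' where f': "\<And>i. i \<in> S \<Longrightarrow> (f i has_derivative f' i) (at p)"
    using bchoice by metis
  have D: "((\<lambda>q. \<Prod>i\<in>S. f i q) has_derivative (\<lambda>y. \<Sum>i\<in>S. f' i y * (\<Prod>j\<in>S - {i}. f j p))) (at p)"
    by (rule has_derivative_prod) (use f' in auto)
  then show "dd d (\<lambda>q. \<Prod>i\<in>S. f i q) p = (\<Sum>i\<in>S. dd d (f i) p * (\<Prod>j\<in>S - {i}. f j p))"
  proof -
    have "(\<Sum>i\<in>S. f' i (dvec d) * (\<Prod>j\<in>S - {i}. f j p)) = (\<Sum>i\<in>S. dd d (f i) p * (\<Prod>j\<in>S - {i}. f j p))"
      using f' by (intro sum.cong refl) (simp add: dd_eq')
    then show ?thesis using dd_eq[OF D] by simp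
  qed
  show "(\<lambda>q. \<Prod>i\<in>S. f i q) differentiable (at p)" using D differentiable_def by blast
qed

lemma differentiable_prod_real:
  fixes f :: "'i \<Rightarrow> 'a::real_normed_vector \<Rightarrow> real"
  assumes "finite S" "\<And>i. i \<in> S \<Longrightarrow> f i differentiable (at p)"
  shows "(\<lambda>q. \<Prod>i\<in>S. f i q) differentiable (at p)"
proof -
  have "\<forall>i\<in>S. \<exists>D. (f i has_derivative D) (at p)" using assms(2) differentiable_def by blast
  then obtain f' where f': "\<And>i. i \<in> S \<Longrightarrow> (f i has_derivative f' i) (at p)"
    using bchoice by metis
  have D: "((\<lambda>q. \<Prod>i\<in>S. f i q) has_derivative (\<lambda>y. \<Sum>i\<in>S. f' i y * (\<Prod>j\<in>S - {i}. f j p))) (at p)"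
    by (rule has_derivative_prod) (use f' in auto)
  then show ?thesis using differentiable_def by blast
qed

lemma dd_of_real:
  fixes f :: "'n::finite pt \<Rightarrow> real"
  assumes "f differentiable (at p)"
  shows "dd d (\<lambda>q. complex_of_real (f q)) p = complex_of_real (dd d f p)"
proof -
  obtain f' where f': "(f has_derivative f') (at p)" using assms differentiable_def by blast
  have "((\<lambda>q. complex_of_real (f q)) has_derivative (\<lambda>y. complex_of_real (f' y))) (at p)"
    using has_derivative_of_real[OF f'] .
  from dd_eq[OF this] show ?thesis by (simp add: dd_eq[OF f'])
qed


section \<open>Determinants\<close>

lemma det_differentiable:
  fixes M :: "'a::real_normed_vector \<Rightarrow> real^'m::finite^'m"
  assumes "\<And>i j. (\<lambda>q. M q $ i $ j) differentiable (at p)"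
  shows "(\<lambda>q. det (M q)) differentiable (at p)"
  unfolding det_def
  by (intro differentiable_sum ballI differentiable_mult differentiable_const
        differentiable_prod_real finite assms)

lemma det_dd:
  fixes M :: "'n::finite pt \<Rightarrow> real^'m::finite^'m"
  assumes "\<And>i j. (\<lambda>q. M q $ i $ j) differentiable (at p)"
  shows "dd d (\<lambda>q. det (M q)) p =
     (\<Sum>i\<in>UNIV. det (\<chi> j. if j = i then (\<chi> k. dd d (\<lambda>q. M q $ i $ k) p) else M p $ j))"
proof -
  let ?P = "{\<pi>. \<pi> permutes (UNIV :: 'm set)}"
  have "dd d (\<lambda>q. det (M q)) p =
     (\<Sum>\<pi>\<in>?P. of_int (sign \<pi>) * (\<Sum>i\<in>UNIV. dd d (\<lambda>q. M q $ i $ \<pi> i) p * (\<Prod>j\<in>UNIV - {i}. M p $ j $ \<pi> j)))"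
  proof -
    have fP: "finite ?P" by (simp add: finite_permutations)
    have dprod: "(\<lambda>q. \<Prod>i\<in>UNIV. M q $ i $ \<pi> i) differentiable (at p)" for \<pi>
      by (rule differentiable_prod_real) (auto intro: assms)
    have "dd d (\<lambda>q. det (M q)) p = (\<Sum>\<pi>\<in>?P. dd d (\<lambda>q. of_int (sign \<pi>) * (\<Prod>i\<in>UNIV. M q $ i $ \<pi> i)) p)"
      unfolding det_def by (rule dd_sum[OF fP]) (intro differentiable_mult differentiable_const dprod)
    also have "\<dots> = (\<Sum>\<pi>\<in>?P. of_int (sign \<pi>) * (\<Sum>i\<in>UNIV. dd d (\<lambda>q. M q $ i $ \<pi> i) p * (\<Prod>j\<in>UNIV - {i}. M p $ j $ \<pi> j)))"
      by (intro sum.cong refl) (simp add: dd_mult[OF differentiable_const dprod] dd_const dd_prod(1) assms)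
    finally show ?thesis .
  qed
  also have "\<dots> = (\<Sum>i\<in>UNIV. \<Sum>\<pi>\<in>?P. of_int (sign \<pi>) *
        (\<Prod>j\<in>UNIV. (\<chi> j. if j = i then (\<chi> k. dd d (\<lambda>q. M q $ i $ k) p) else M p $ j) $ j $ \<pi> j))"
  proof -
    have "(\<Prod>j\<in>UNIV. (\<chi> j. if j = i then (\<chi> k. dd d (\<lambda>q. M q $ i $ k) p) else M p $ j) $ j $ \<pi> j)
        = dd d (\<lambda>q. M q $ i $ \<pi> i) p * (\<Prod>j\<in>UNIV - {i}. M p $ j $ \<pi> j)" for i \<pi>
      by (subst prod.remove[of UNIV i]) (auto intro!: prod.cong)
    then show ?thesis
      by (simp add: sum_distrib_left) (rule sum.swap)
  qed
  finally show ?thesis by (simp add: det_def)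
qed

lemma minv: "invertible A \<Longrightarrow> A ** matrix_inv A = mat 1 \<and> matrix_inv A ** A = mat 1"
  unfolding invertible_def matrix_inv_def by (rule someI_ex)

lemma det_row_replace:
  fixes A :: "real^'m::finite^'m"
  assumes "invertible A"
  shows "det (\<chi> j. if j = i then r else A $ j) = (r v* matrix_inv A) $ i * det A"
proof -
  define x where "x = r v* matrix_inv A"
  have xA: "x v* A = r" unfolding x_def
    using minv[OF assms] by (simp add: vector_matrix_mul_assoc)
  have S: "(\<Sum>k\<in>UNIV. x $ k *s A $ k) = r"
    using xA by (simp add: vec_eq_iff vector_matrix_mult_def mult.commute)
  have R: "row j A = A $ j" for j by (simp add: row_def vec_eq_iff)
  have "det (\<chi> j. if j = i then r else A $ j) = x $ i * det A"
    using cramer_lemma_transpose[of i x A] by (simp only: S R)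
  then show ?thesis by (simp add: x_def)
qed

lemma quad_zero:
  fixes A :: "real^'m::finite^'m"
  assumes "A *v x = 0"
  shows "(\<Sum>a\<in>UNIV. \<Sum>b\<in>UNIV. A $ a $ b * x $ a * x $ b) = 0"
proof -
  have "(\<Sum>a\<in>UNIV. \<Sum>b\<in>UNIV. A $ a $ b * x $ a * x $ b) = (\<Sum>a\<in>UNIV. x $ a * (A *v x) $ a)"
    by (simp add: matrix_vector_mult_def sum_distrib_left mult_ac)
  also have "\<dots> = 0" using assms by simp
  finally show ?thesis .
qed

lemma posdef_invertible:
  fixes A :: "real^'m::finite^'m"
  assumes "\<forall>v. v \<noteq> 0 \<longrightarrow> (\<Sum>a\<in>UNIV. \<Sum>b\<in>UNIV. A $ a $ b * v $ a * v $ b) > 0"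
  shows "invertible A"
proof -
  have "\<forall>x. A *v x = 0 \<longrightarrow> x = 0" using assms quad_zero by fastforce
  then obtain B where "B ** A = mat 1" using matrix_left_invertible_ker by blast
  then show ?thesis unfolding invertible_def using matrix_left_right_inverse by blast
qed

lemma posdef_det_pos:
  fixes A :: "real^'m::finite^'m"
  assumes pd: "\<forall>v. v \<noteq> 0 \<longrightarrow> (\<Sum>a\<in>UNIV. \<Sum>b\<in>UNIV. A $ a $ b * v $ a * v $ b) > 0"
  shows "det A > 0"
proof (rule ccontr)
  assume "\<not> det A > 0"
  define M where "M t = (\<chi> a b. (1 - t) * A $ a $ b + t * (if a = b then 1 else 0))" for t :: real
  define f where "f t = det (M t)" for t
  have f0: "f 0 \<le> 0" using \<open>\<not> det A > 0\<close> by (simp add: f_def M_def)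
  have f1: "f 1 = 1" by (simp add: f_def M_def mat_def[symmetric] det_I)
  have cont: "isCont f x" for x
  proof -
    have "f differentiable (at x)" unfolding f_def
      by (rule det_differentiable) (auto simp: M_def)
    then show ?thesis by (simp add: differentiable_imp_continuous_within)
  qed
  obtain t where t: "0 \<le> t" "t \<le> 1" "f t = 0" using IVT[of f 0 0 1] f0 f1 cont by auto
  have "\<forall>v. v \<noteq> 0 \<longrightarrow> (\<Sum>a\<in>UNIV. \<Sum>b\<in>UNIV. M t $ a $ b * v $ a * v $ b) > 0"
  proof (intro allI impI)
    fix v :: "real^'m" assume v: "v \<noteq> 0"
    have "(\<Sum>a\<in>UNIV. \<Sum>b\<in>UNIV. M t $ a $ b * v $ a * v $ b)
       = (1 - t) * (\<Sum>a\<in>UNIV. \<Sum>b\<in>UNIV. A $ a $ b * v $ a * v $ b) + t * (\<Sum>a\<in>UNIV. v $ a * v $ a)"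
    proof -
      have e1: "M t $ a $ b * v $ a * v $ b = (1 - t) * (A $ a $ b * v $ a * v $ b) + t * ((if a = b then 1 else 0) * v $ a * v $ b)" for a b
        by (simp add: M_def algebra_simps)
      have e2: "(\<Sum>b\<in>UNIV. (if a = b then 1 else 0) * v $ a * v $ b) = v $ a * v $ a" for a
      proof -
        have "(\<Sum>b\<in>UNIV. (if a = b then 1 else 0) * v $ a * v $ b) = (\<Sum>b\<in>UNIV. if a = b then v $ a * v $ b else 0)"
          by (rule sum.cong) auto
        then show ?thesis by simp
      qed
      show ?thesis unfolding e1 by (simp add: sum.distrib sum_distrib_left[symmetric] e2)
    qed
    moreover have "(\<Sum>a\<in>UNIV. v $ a * v $ a) > 0"
    proof -
      obtain a where "v $ a \<noteq> 0" using v by (auto simp: vec_eq_iff)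
      then have "0 < v $ a * v $ a" by (auto simp: zero_less_mult_iff)
      also have "\<dots> \<le> (\<Sum>a\<in>UNIV. v $ a * v $ a)"
        by (rule member_le_sum) auto
      finally show ?thesis .
    qed
    moreover have "(\<Sum>a\<in>UNIV. \<Sum>b\<in>UNIV. A $ a $ b * v $ a * v $ b) > 0" using pd v by blast
    ultimately show "(\<Sum>a\<in>UNIV. \<Sum>b\<in>UNIV. M t $ a $ b * v $ a * v $ b) > 0"
      using t(1,2)
      by (cases "t = 1") (auto intro!: add_pos_nonneg mult_pos_pos mult_nonneg_nonneg)
  qed
  then have "invertible (M t)" by (rule posdef_invertible)
  then show False using t(3) by (simp add: f_def invertible_det_nz)
qed


inductive_set galg :: "('n::finite) pt set \<Rightarrow> 'n metric \<Rightarrow> ('n pt \<Rightarrow> real) set" for U g where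
  sm: "smooth_on_pt U h \<Longrightarrow> h \<in> galg U g"
| gi: "ginv g a b \<in> galg U g"
| add: "f \<in> galg U g \<Longrightarrow> h \<in> galg U g \<Longrightarrow> (\<lambda>q. f q + h q) \<in> galg U g"
| mul: "f \<in> galg U g \<Longrightarrow> h \<in> galg U g \<Longrightarrow> (\<lambda>q. f q * h q) \<in> galg U g"

lemma smooth_const: "smooth_on_pt U (\<lambda>q::'n::finite pt. c :: real)"
proof -
  have "smooth_on_pt UNIV (\<lambda>q::'n pt. c)"
  proof (rule smooth_coinduct[where A="range (\<lambda>c (q::'n pt). c::real)"])
    fix h :: "'n pt \<Rightarrow> real" assume "h \<in> range (\<lambda>c q. c)"
    then obtain c' where h: "h = (\<lambda>q. c')" by blast
    show "(\<forall>p\<in>UNIV. h differentiable at p) \<and> (\<forall>d. \<exists>h'\<in>range (\<lambda>c q. c). \<forall>p\<in>UNIV. dd d h p = h' p)"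
      unfolding h by (auto simp: dd_const intro!: rangeI[of _ 0])
  qed auto
  then show ?thesis unfolding smooth_on_pt_def by blast
qed

lemma galg_const: "(\<lambda>q. c) \<in> galg U g"
  by (rule galg.sm[OF smooth_const])

lemma galg_sum:
  assumes "finite S" "\<And>i. i \<in> S \<Longrightarrow> f i \<in> galg U g"
  shows "(\<lambda>q. \<Sum>i\<in>S. f i q) \<in> galg U g"
  using assms
proof (induction S rule: finite_induct)
  case empty then show ?case by (simp add: galg_const)
next
  case (insert x F)
  then show ?case by (simp add: galg.add)
qed

context
  fixes U :: "('n::finite) pt set" and g :: "'n metric"
  assumes tm: "tang_metric U g"
begin

lemma U_open: "open U" using tm by (simp add: tang_metric_def)

lemma g_smooth: "smooth_on_pt U (g a b)" using tm by (simp add: tang_metric_def)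

lemma g_diff: "p \<in> U \<Longrightarrow> g a b differentiable (at p)" using g_smooth smooth_diff by blast

lemma G_pd: "p \<in> U \<Longrightarrow> \<forall>v. v \<noteq> 0 \<longrightarrow> (\<Sum>a\<in>UNIV. \<Sum>b\<in>UNIV. gmat g p $ a $ b * v $ a * v $ b) > 0"
  using tm by (simp add: tang_metric_def gmat_def)

lemma G_inv: "p \<in> U \<Longrightarrow> invertible (gmat g p)"
  using G_pd posdef_invertible by blast

lemma gdet_pos: "p \<in> U \<Longrightarrow> gdet g p > 0"
  unfolding gdet_def using G_pd posdef_det_pos by blast

lemma inv_eq1: "p \<in> U \<Longrightarrow> (\<Sum>k\<in>UNIV. ginv g a k p * g k b p) = (if a = b then 1 else 0)"
proof -
  assume p: "p \<in> U"
  have "(matrix_inv (gmat g p) ** gmat g p) $ a $ b = mat 1 $ a $ b" using minv[OF G_inv[OF p]] by simp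
  then show ?thesis by (simp add: matrix_matrix_mult_def ginv_def gmat_def mat_def)
qed

lemma inv_eq2: "p \<in> U \<Longrightarrow> (\<Sum>k\<in>UNIV. g a k p * ginv g k b p) = (if a = b then 1 else 0)"
proof -
  assume p: "p \<in> U"
  have "(gmat g p ** matrix_inv (gmat g p)) $ a $ b = mat 1 $ a $ b" using minv[OF G_inv[OF p]] by simp
  then show ?thesis by (simp add: matrix_matrix_mult_def ginv_def gmat_def mat_def)
qed

lemma ginv_cramer:
  assumes p: "p \<in> U"
  shows "ginv g k i p = det (\<chi> a b. if b = k then (if a = i then 1 else 0) else g a b p) / gdet g p"
proof -
  define G where "G = gmat g p"
  define B where "B = matrix_inv G"
  define e where "e = (axis i 1 :: real^'n)"
  have inv: "G ** B = mat 1" using minv[OF G_inv[OF p]] by (simp add: G_def B_def)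
  have "G *v (B *v e) = e" by (simp add: matrix_vector_mul_assoc inv)
  moreover have "det G \<noteq> 0" using gdet_pos[OF p] by (simp add: G_def gdet_def)
  ultimately have "B *v e = (\<chi> k. det (\<chi> i j. if j = k then e $ i else G $ i $ j) / det G)"
    using cramer by blast
  then have "(B *v e) $ k = det (\<chi> a b. if b = k then e $ a else G $ a $ b) / det G" by simp
  moreover have "(B *v e) $ k = B $ k $ i"
  proof -
    have "(B *v e) $ k = (\<Sum>j\<in>UNIV. B $ k $ j * (if j = i then 1 else 0))"
      by (simp add: matrix_vector_mult_def e_def axis_def)
    also have "\<dots> = (\<Sum>j\<in>UNIV. if j = i then B $ k $ j else 0)" by (rule sum.cong) auto
    finally show ?thesis by simp
  qed
  ultimately show ?thesis
    unfolding ginv_def B_def G_def gdet_def e_def axis_def gmat_def by (simp cong: if_cong)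
qed

lemma ginv_diff: "p \<in> U \<Longrightarrow> ginv g k i differentiable (at p)"
proof -
  assume p: "p \<in> U"
  define F where "F q = det (\<chi> a b. if b = k then (if a = i then 1 else 0) else g a b q) / gdet g q" for q
  have dd: "(\<lambda>q. det (\<chi> a b. if b = k then (if a = i then 1 else (0::real)) else g a b q)) differentiable (at p)"
  proof (rule det_differentiable)
    fix a b
    show "(\<lambda>q. (\<chi> a b. if b = k then (if a = i then 1 else (0::real)) else g a b q) $ a $ b) differentiable (at p)"
      by (cases "b = k") (simp_all add: g_diff[OF p])
  qed
  have gd: "gdet g differentiable (at p)"
    unfolding gdet_def[abs_def] by (rule det_differentiable) (simp add: gmat_def g_diff[OF p])
  have "F differentiable (at p)" unfolding F_def
    using differentiable_divide[OF dd gd] gdet_pos[OF p] by simp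
  then obtain F' where F': "(F has_derivative F') (at p)" using differentiable_def by blast
  have "(ginv g k i has_derivative F') (at p)"
    by (rule has_derivative_transform_within_open[OF F' U_open p]) (simp add: F_def ginv_cramer)
  then show ?thesis using differentiable_def by blast
qed

lemma gdet_diff: "p \<in> U \<Longrightarrow> gdet g differentiable (at p)"
  unfolding gdet_def[abs_def] by (rule det_differentiable) (simp add: gmat_def g_diff)

lemma ginv_dd:
  assumes p: "p \<in> U"
  shows "dd d (ginv g a c) p = - (\<Sum>b\<in>UNIV. \<Sum>k\<in>UNIV. ginv g a k p * dd d (g k b) p * ginv g b c p)"
proof -
  have E: "(\<Sum>k\<in>UNIV. dd d (ginv g a k) p * g k b p) = - (\<Sum>k\<in>UNIV. ginv g a k p * dd d (g k b) p)" for b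
  proof -
    have "dd d (\<lambda>q. \<Sum>k\<in>UNIV. ginv g a k q * g k b q) p = dd d (\<lambda>q. if a = b then 1 else 0) p"
      by (rule dd_local[OF U_open p]) (simp add: inv_eq1)
    also have "\<dots> = 0" by (simp add: dd_const)
    finally have "dd d (\<lambda>q. \<Sum>k\<in>UNIV. ginv g a k q * g k b q) p = 0" .
    moreover have "dd d (\<lambda>q. \<Sum>k\<in>UNIV. ginv g a k q * g k b q) p
        = (\<Sum>k\<in>UNIV. ginv g a k p * dd d (g k b) p + dd d (ginv g a k) p * g k b p)"
      by (subst dd_sum) (auto intro!: differentiable_mult ginv_diff g_diff p simp: dd_mult ginv_diff g_diff p)
    ultimately show ?thesis by (simp add: sum.distrib eq_neg_iff_add_eq_0 add.commute)
  qed
  have "dd d (ginv g a c) p = (\<Sum>k\<in>UNIV. dd d (ginv g a k) p * (if k = c then 1 else 0))"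
  proof -
    have "(\<Sum>k\<in>UNIV. dd d (ginv g a k) p * (if k = c then 1 else 0)) = (\<Sum>k\<in>UNIV. if k = c then dd d (ginv g a k) p else 0)"
      by (rule sum.cong) auto
    then show ?thesis by simp
  qed
  also have "\<dots> = (\<Sum>k\<in>UNIV. dd d (ginv g a k) p * (\<Sum>b\<in>UNIV. g k b p * ginv g b c p))"
    by (simp add: inv_eq2[OF p])
  also have "\<dots> = (\<Sum>b\<in>UNIV. (\<Sum>k\<in>UNIV. dd d (ginv g a k) p * g k b p) * ginv g b c p)"
    by (simp add: sum_distrib_left sum_distrib_right mult_ac) (rule sum.swap)
  also have "\<dots> = (\<Sum>b\<in>UNIV. - (\<Sum>k\<in>UNIV. ginv g a k p * dd d (g k b) p) * ginv g b c p)"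
    by (simp add: E)
  also have "\<dots> = - (\<Sum>b\<in>UNIV. \<Sum>k\<in>UNIV. ginv g a k p * dd d (g k b) p * ginv g b c p)"
    by (simp add: sum_distrib_right sum_negf)
  finally show ?thesis .
qed

lemma galg_prop:
  assumes "h \<in> galg U g"
  shows "(\<forall>p\<in>U. h differentiable (at p)) \<and> (\<forall>d. \<exists>h'\<in>galg U g. \<forall>p\<in>U. dd d h p = h' p)"
  using assms
proof (induction rule: galg.induct)
  case (sm h)
  then show ?case using smooth_diff smooth_dd galg.sm by blast
next
  case (gi a c)
  have "\<forall>p\<in>U. ginv g a c differentiable (at p)" using ginv_diff by blast
  moreover have "\<exists>h'\<in>galg U g. \<forall>p\<in>U. dd d (ginv g a c) p = h' p" for d
  proof
    show "(\<lambda>q. (-1) * (\<Sum>b\<in>UNIV. \<Sum>k\<in>UNIV. ginv g a k q * dd d (g k b) q * ginv g b c q)) \<in> galg U g"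
      by (intro galg.mul galg_const galg_sum finite galg.gi galg.sm smooth_dd g_smooth)
    show "\<forall>p\<in>U. dd d (ginv g a c) p = (-1) * (\<Sum>b\<in>UNIV. \<Sum>k\<in>UNIV. ginv g a k p * dd d (g k b) p * ginv g b c p)"
      using ginv_dd by simp
  qed
  ultimately show ?case by blast
next
  case (add f h)
  have "\<forall>p\<in>U. (\<lambda>q. f q + h q) differentiable (at p)" using add.IH differentiable_add by blast
  moreover have "\<exists>h'\<in>galg U g. \<forall>p\<in>U. dd d (\<lambda>q. f q + h q) p = h' p" for d
  proof -
    obtain f' h' where f': "f' \<in> galg U g" "\<forall>p\<in>U. dd d f p = f' p"
      and h': "h' \<in> galg U g" "\<forall>p\<in>U. dd d h p = h' p" using add.IH by blast
    show ?thesis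
    proof
      show "(\<lambda>q. f' q + h' q) \<in> galg U g" using f' h' galg.add by blast
      show "\<forall>p\<in>U. dd d (\<lambda>q. f q + h q) p = f' p + h' p"
        using add.IH f' h' by (simp add: dd_add)
    qed
  qed
  ultimately show ?case by blast
next
  case (mul f h)
  have "\<forall>p\<in>U. (\<lambda>q. f q * h q) differentiable (at p)" using mul.IH differentiable_mult by blast
  moreover have "\<exists>h'\<in>galg U g. \<forall>p\<in>U. dd d (\<lambda>q. f q * h q) p = h' p" for d
  proof -
    obtain f' h' where f': "f' \<in> galg U g" "\<forall>p\<in>U. dd d f p = f' p"
      and h': "h' \<in> galg U g" "\<forall>p\<in>U. dd d h p = h' p" using mul.IH by blast
    show ?thesis
    proof
      show "(\<lambda>q. f q * h' q + f' q * h q) \<in> galg U g" using f' h' mul.hyps galg.add galg.mul by blast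
      show "\<forall>p\<in>U. dd d (\<lambda>q. f q * h q) p = f p * h' p + f' p * h p"
        using mul.IH f' h' by (simp add: dd_mult)
    qed
  qed
  ultimately show ?case by blast
qed

lemma ginv_smooth: "smooth_on_pt U (ginv g a b)"
  by (rule smooth_coinduct[OF U_open galg_prop galg.gi])

lemma gdet_dd:
  assumes p: "p \<in> U"
  shows "dd d (gdet g) p = gdet g p * (\<Sum>i\<in>UNIV. \<Sum>k\<in>UNIV. ginv g k i p * dd d (g i k) p)"
proof -
  have "dd d (gdet g) p = dd d (\<lambda>q. det (gmat g q)) p" by (simp add: gdet_def[abs_def])
  also have "\<dots> = (\<Sum>i\<in>UNIV. det (\<chi> j. if j = i then (\<chi> k. dd d (\<lambda>q. gmat g q $ i $ k) p) else gmat g p $ j))"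
    by (rule det_dd) (simp add: gmat_def g_diff[OF p])
  also have "\<dots> = (\<Sum>i\<in>UNIV. ((\<chi> k. dd d (g i k) p) v* matrix_inv (gmat g p)) $ i * det (gmat g p))"
    by (intro sum.cong refl) (simp add: det_row_replace[OF G_inv[OF p]] gmat_def)
  also have "\<dots> = gdet g p * (\<Sum>i\<in>UNIV. \<Sum>k\<in>UNIV. ginv g k i p * dd d (g i k) p)"
    by (simp add: vector_matrix_mult_def ginv_def gdet_def sum_distrib_left mult_ac)
  finally show ?thesis .
qed

lemma lndet_dd:
  assumes p: "p \<in> U"
  shows "dd d (\<lambda>q. ln (gdet g q)) p = (\<Sum>i\<in>UNIV. \<Sum>k\<in>UNIV. ginv g k i p * dd d (g i k) p)"
proof -
  obtain D where D: "(gdet g has_derivative D) (at p)" using gdet_diff[OF p] differentiable_def by blast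
  have ln': "(ln has_derivative (\<lambda>y. inverse (gdet g p) * y)) (at (gdet g p))"
    using DERIV_ln[OF gdet_pos[OF p]] by (simp add: has_field_derivative_def)
  have "((\<lambda>q. ln (gdet g q)) has_derivative (\<lambda>y. inverse (gdet g p) * D y)) (at p)"
    using has_derivative_compose[OF D ln'] .
  then have "dd d (\<lambda>q. ln (gdet g q)) p = inverse (gdet g p) * dd d (gdet g) p"
    using dd_eq[OF D] dd_eq by simp
  also have "\<dots> = (\<Sum>i\<in>UNIV. \<Sum>k\<in>UNIV. ginv g k i p * dd d (g i k) p)"
    using gdet_dd[OF p] gdet_pos[OF p] by simp
  finally show ?thesis .
qed

end


section \<open>Multi-index lemmas\<close>

definition ul :: "('n::{finite,linorder}) list" where "ul = sorted_list_of_set UNIV"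

lemma ul_distinct: "distinct ul" and ul_set: "set ul = UNIV"
  by (simp_all add: ul_def)

lemma sum_ul: "sum_list (map f ul) = (\<Sum>\<alpha>\<in>UNIV. f \<alpha>)"
  by (simp add: sum_list_distinct_conv_sum_set ul_distinct ul_set)

lemma mset_concat_map: "mset (concat (map f xs)) = sum_list (map (\<lambda>x. mset (f x)) xs)"
  by (induction xs) auto

lemma mset_mi_list: "mset (mi_list K) = (\<Sum>\<alpha>\<in>UNIV. replicate_mset (K \<alpha>) \<alpha>)"
proof -
  have "mset (mi_list K) = sum_list (map (\<lambda>\<alpha>. replicate_mset (K \<alpha>) \<alpha>) ul)"
    unfolding mi_list_def ul_def[symmetric] mset_concat_map by simp
  then show ?thesis by (simp add: sum_ul)
qed

lemma length_mi_list: "length (mi_list K) = mi_abs K"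
  by (simp add: mi_list_def length_concat ul_def[symmetric] o_def sum_ul mi_abs_def)

definition unit :: "'n::{finite,linorder} \<Rightarrow> 'n \<Rightarrow> nat" where "unit \<alpha> = (\<lambda>\<beta>. if \<beta> = \<alpha> then 1 else 0)"

lemma mset_mi_list_upd:
  fixes K :: "'n::{finite,linorder} \<Rightarrow> nat"
  shows "mset (mi_list (K(\<gamma> := Suc (K \<gamma>)))) = mset (mi_list K) + {#\<gamma>#}"
proof -
  have "(\<Sum>\<alpha>\<in>UNIV. replicate_mset ((K(\<gamma> := Suc (K \<gamma>))) \<alpha>) \<alpha>)
     = (\<Sum>\<alpha>\<in>UNIV. replicate_mset (K \<alpha>) \<alpha> + (if \<alpha> = \<gamma> then {#\<gamma>#} else {#}))"
    by (rule sum.cong) auto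
  also have "\<dots> = (\<Sum>\<alpha>\<in>UNIV. replicate_mset (K \<alpha>) \<alpha>) + {#\<gamma>#}"
    by (simp add: sum.distrib)
  finally show ?thesis by (simp add: mset_mi_list)
qed

lemma mi_list_zero: "mi_list (\<lambda>_. 0) = []"
  by (simp add: mi_list_def)

lemma mi_list_unit: "mi_list (unit \<gamma>) = [\<gamma>]"
proof -
  have "unit \<gamma> = (\<lambda>_. 0)(\<gamma> := Suc ((\<lambda>_. 0) \<gamma>))" by (auto simp: unit_def)
  then have "mset (mi_list (unit \<gamma>)) = mset (mi_list ((\<lambda>_. 0)(\<gamma> := Suc ((\<lambda>_. 0) \<gamma>))))"
    by simp
  also have "\<dots> = {#\<gamma>#}" using mset_mi_list_upd[of "\<lambda>_. 0" \<gamma>] by (simp add: mi_list_zero)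
  finally show ?thesis by (cases "mi_list (unit \<gamma>)") auto
qed

lemma mi_abs_upd: fixes K :: "'n::{finite,linorder} \<Rightarrow> nat" shows "mi_abs (K(\<gamma> := Suc (K \<gamma>))) = Suc (mi_abs K)"
  using length_mi_list[of "K(\<gamma> := Suc (K \<gamma>))"] length_mi_list[of K]
        arg_cong[OF mset_mi_list_upd[of K \<gamma>], of size] by simp

lemma mi_abs_add: "mi_abs (\<lambda>\<alpha>. e \<alpha> + f \<alpha>) = mi_abs e + mi_abs f"
  by (simp add: mi_abs_def sum.distrib)

lemma mi_abs_unit: "mi_abs (unit \<gamma>) = 1"
  using length_mi_list[of "unit \<gamma>"] by (simp add: mi_list_unit)

lemma mi_abs_zero: "mi_abs (\<lambda>_. 0) = 0"
  by (simp add: mi_abs_def)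

fun datm :: "('n::{finite,linorder}) option \<Rightarrow> 'n atm \<Rightarrow> 'n atm" where
  "datm (Some \<gamma>) (u, \<alpha>, \<beta>, K, d) = (u, \<alpha>, \<beta>, K(\<gamma> := Suc (K \<gamma>)), d)"
| "datm None (u, \<alpha>, \<beta>, K, d) = (u, \<alpha>, \<beta>, K, Suc d)"

lemma atm_w_datm: "atm_w (datm D a) = Suc (atm_w a)"
  by (cases a; cases D) (auto simp: mi_abs_upd)

lemma atm_nw_datm: "atm_nw (datm D a) = (if D = None then Suc (atm_nw a) else atm_nw a)"
  by (cases a; cases D) auto

definition gia :: "'n \<Rightarrow> 'n \<Rightarrow> ('n::{finite,linorder}) atm" where
  "gia \<alpha> \<beta> = (True, \<alpha>, \<beta>, (\<lambda>_. 0), 0)"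

lemma atm_val_gia: "atm_val g (gia \<alpha> \<beta>) = ginv g \<alpha> \<beta>"
  by (rule ext) (simp add: gia_def mi_list_zero iterd_Nil)

lemma atm_w_gia: "atm_w (gia \<alpha> \<beta>) = 0" and atm_nw_gia: "atm_nw (gia \<alpha> \<beta>) = 0"
  by (simp_all add: gia_def mi_abs_zero)

context
  fixes U :: "('n::{finite,linorder}) pt set" and g :: "'n metric"
  assumes tm: "tang_metric U g"
begin

lemma atm_smooth: "smooth_on_pt U (atm_val g a)"
proof -
  obtain u \<alpha> \<beta> K d where a: "a = (u, \<alpha>, \<beta>, K, d)" by (cases a) auto
  have "smooth_on_pt U (if u then ginv g \<alpha> \<beta> else g \<alpha> \<beta>)"
    using ginv_smooth[OF tm] g_smooth[OF tm] by simp
  then show ?thesis unfolding a atm_val.simps[abs_def] by (rule smooth_iterd)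
qed

lemma atm_diff: "p \<in> U \<Longrightarrow> atm_val g a differentiable (at p)"
  using atm_smooth smooth_diff by blast

lemma atm_dd:
  assumes p: "p \<in> U"
  shows "dd D (atm_val g a) p = atm_val g (datm D a) p"
proof -
  obtain u \<alpha> \<beta> K d where a: "a = (u, \<alpha>, \<beta>, K, d)" by (cases a) auto
  define h where "h = (if u then ginv g \<alpha> \<beta> else g \<alpha> \<beta>)"
  have sh: "smooth_on_pt U h"
    using ginv_smooth[OF tm] g_smooth[OF tm] by (simp add: h_def)
  have "dd D (atm_val g a) p = iterd ((map Some (mi_list K) @ replicate d None) @ [D]) h p"
    by (simp add: a h_def iterd_append iterd_Cons iterd_Nil atm_val.simps[abs_def])
  also have "\<dots> = atm_val g (datm D a) p"
  proof (cases D)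
    case None
    then show ?thesis by (simp add: a h_def replicate_append_same)
  next
    case (Some \<gamma>)
    have "mset ((map Some (mi_list K) @ replicate d None) @ [D]) =
          mset (map Some (mi_list (K(\<gamma> := Suc (K \<gamma>)))) @ replicate d None)"
      by (simp add: Some mset_mi_list_upd)
    then have "iterd ((map Some (mi_list K) @ replicate d None) @ [D]) h p =
       iterd (map Some (mi_list (K(\<gamma> := Suc (K \<gamma>)))) @ replicate d None) h p"
      using iterd_perm[OF U_open[OF tm] sh] p by blast
    then show ?thesis by (simp add: a h_def Some)
  qed
  finally show ?thesis .
qed

lemma q2_pos:
  assumes p: "p \<in> U" and \<xi>: "\<xi> \<noteq> 0"
  shows "q2 g p \<xi> > 0"
proof -
  define G where "G = gmat g p"
  define B where "B = matrix_inv G"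
  define y where "y = B *v \<xi>"
  have GB: "G ** B = mat 1" using minv[OF G_inv[OF tm p]] by (simp add: G_def B_def)
  have Gy: "G *v y = \<xi>" by (simp add: y_def matrix_vector_mul_assoc GB)
  have y0: "y \<noteq> 0" using Gy \<xi> by auto
  have "q2 g p \<xi> = (\<Sum>a\<in>UNIV. \<xi> $ a * y $ a)"
    by (simp add: q2_def y_def matrix_vector_mult_def sum_distrib_left ginv_def B_def G_def mult_ac)
  also have "\<dots> = (\<Sum>a\<in>UNIV. \<Sum>b\<in>UNIV. G $ a $ b * y $ a * y $ b)"
    by (simp add: Gy[symmetric] matrix_vector_mult_def sum_distrib_left sum_distrib_right mult_ac)
  also have "\<dots> > 0" using G_pd[OF tm p] y0 by (simp add: G_def)
  finally show ?thesis .
qed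

end


type_synonym 'n st = "int \<times> 'n mnm"

definition nq :: "('n::finite) metric \<Rightarrow> 'n pt \<Rightarrow> real^'n \<Rightarrow> real" where
  "nq g p \<xi> = sqrt (q2 g p \<xi>)"

definition aval :: "('n::{finite,linorder}) metric \<Rightarrow> 'n atm list \<Rightarrow> 'n pt \<Rightarrow> real" where
  "aval g as p = (\<Prod>a\<leftarrow>as. atm_val g a p)"

definition xpow :: "('n::finite \<Rightarrow> nat) \<Rightarrow> real^'n \<Rightarrow> real" where
  "xpow e \<xi> = (\<Prod>\<alpha>\<in>UNIV. (\<xi>$\<alpha>) ^ (e \<alpha>))"

fun sv :: "('n::{finite,linorder}) metric \<Rightarrow> 'n st \<Rightarrow> 'n sym" where
  "sv g (k, (c, as, e)) p \<xi> = c * complex_of_real (nq g p \<xi> powi (- k) * aval g as p * xpow e \<xi>)"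

definition lv :: "('n::{finite,linorder}) metric \<Rightarrow> 'n st list \<Rightarrow> 'n sym" where
  "lv g R p \<xi> = (\<Sum>t\<leftarrow>R. sv g t p \<xi>)"

fun sgood :: "nat \<Rightarrow> nat \<Rightarrow> ('n::finite) st \<Rightarrow> bool" where
  "sgood w \<pi> (k, M) \<longleftrightarrow> mnm_w M = w \<and> even (mnm_w M + mnm_nw M + mnm_deg M + \<pi>)"

definition good :: "nat \<Rightarrow> nat \<Rightarrow> ('n::finite) st list \<Rightarrow> bool" where
  "good w \<pi> R \<longleftrightarrow> (\<forall>t\<in>set R. sgood w \<pi> t)"

fun scl1 :: "complex \<Rightarrow> 'n st \<Rightarrow> 'n st" where
  "scl1 c (k, (c', as, e)) = (k, (c * c', as, e))"

definition scl :: "complex \<Rightarrow> 'n st list \<Rightarrow> 'n st list" where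
  "scl c R = map (scl1 c) R"

fun shf1 :: "int \<Rightarrow> 'n st \<Rightarrow> 'n st" where
  "shf1 j (k, M) = (k + j, M)"

definition shf :: "int \<Rightarrow> 'n st list \<Rightarrow> 'n st list" where
  "shf j R = map (shf1 j) R"

fun tmul :: "'n st \<Rightarrow> 'n st \<Rightarrow> 'n st" where
  "tmul (k1, (c1, as1, e1)) (k2, (c2, as2, e2)) = (k1 + k2, (c1 * c2, as1 @ as2, \<lambda>\<alpha>. e1 \<alpha> + e2 \<alpha>))"

definition lmul :: "'n st list \<Rightarrow> 'n st list \<Rightarrow> 'n st list" where
  "lmul R S = concat (map (\<lambda>t. map (tmul t) S) R)"

lemma lv_Nil[simp]: "lv g [] p \<xi> = 0" by (simp add: lv_def)
lemma lv_Cons: "lv g (t # R) p \<xi> = sv g t p \<xi> + lv g R p \<xi>" by (simp add: lv_def)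
lemma lv_append: "lv g (R @ S) p \<xi> = lv g R p \<xi> + lv g S p \<xi>" by (simp add: lv_def)
lemma lv_concat: "lv g (concat (map f xs)) p \<xi> = (\<Sum>x\<leftarrow>xs. lv g (f x) p \<xi>)"
  by (induction xs) (simp_all add: lv_append)

lemma lv_scl: "lv g (scl c R) p \<xi> = c * lv g R p \<xi>"
proof -
  have "sv g (scl1 c t) p \<xi> = c * sv g t p \<xi>" for t
    by (cases t) auto
  then show ?thesis by (induction R) (simp_all add: scl_def lv_def algebra_simps)
qed

lemma lv_shf:
  assumes "nq g p \<xi> \<noteq> 0"
  shows "lv g (shf j R) p \<xi> = complex_of_real (nq g p \<xi> powi (- j)) * lv g R p \<xi>"
proof -
  have "sv g (shf1 j t) p \<xi> = complex_of_real (nq g p \<xi> powi (- j)) * sv g t p \<xi>" for t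
  proof -
    obtain k c as e where t: "t = (k, (c, as, e))" by (cases t) auto
    have "nq g p \<xi> powi (- (k + j)) = nq g p \<xi> powi (- k) * nq g p \<xi> powi (- j)"
      using assms by (simp add: power_int_add[symmetric])
    then show ?thesis by (simp add: t mult_ac)
  qed
  then show ?thesis by (induction R) (simp_all add: shf_def lv_def algebra_simps)
qed

lemma aval_append: "aval g (as @ bs) p = aval g as p * aval g bs p"
  by (simp add: aval_def)

lemma xpow_add: "xpow (\<lambda>\<alpha>. e1 \<alpha> + e2 \<alpha>) \<xi> = xpow e1 \<xi> * xpow e2 \<xi>"
  by (simp add: xpow_def power_add prod.distrib)

lemma sv_tmul:
  assumes "nq g p \<xi> \<noteq> 0"
  shows "sv g (tmul t1 t2) p \<xi> = sv g t1 p \<xi> * sv g t2 p \<xi>"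
proof -
  obtain k1 c1 as1 e1 where t1: "t1 = (k1, (c1, as1, e1))" by (cases t1) auto
  obtain k2 c2 as2 e2 where t2: "t2 = (k2, (c2, as2, e2))" by (cases t2) auto
  have "nq g p \<xi> powi (- (k1 + k2)) = nq g p \<xi> powi (- k1) * nq g p \<xi> powi (- k2)"
    using assms by (simp add: power_int_add[symmetric])
  then show ?thesis by (simp add: t1 t2 aval_append xpow_add mult_ac)
qed

lemma lv_lmul:
  assumes "nq g p \<xi> \<noteq> 0"
  shows "lv g (lmul R S) p \<xi> = lv g R p \<xi> * lv g S p \<xi>"
proof -
  have "lv g (map (tmul t) S) p \<xi> = sv g t p \<xi> * lv g S p \<xi>" for t
    by (induction S) (simp_all add: lv_Cons sv_tmul[OF assms] algebra_simps)
  then show ?thesis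
    by (induction R) (simp_all add: lmul_def lv_append lv_Cons algebra_simps)
qed

lemma good_Nil[simp]: "good w \<pi> []" by (simp add: good_def)
lemma good_append: "good w \<pi> R \<Longrightarrow> good w \<pi> S \<Longrightarrow> good w \<pi> (R @ S)"
  by (auto simp: good_def)
lemma good_concat: "(\<And>x. x \<in> set xs \<Longrightarrow> good w \<pi> (f x)) \<Longrightarrow> good w \<pi> (concat (map f xs))"
  by (auto simp: good_def)
lemma good_scl: "good w \<pi> R \<Longrightarrow> good w \<pi> (scl c R)"
proof -
  have "sgood w \<pi> (scl1 c t) = sgood w \<pi> t" for t
    by (cases t) auto
  then show "good w \<pi> R \<Longrightarrow> good w \<pi> (scl c R)" unfolding good_def scl_def by auto
qed
lemma good_shf: "good w \<pi> R \<Longrightarrow> good w \<pi> (shf j R)"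
proof -
  have "sgood w \<pi> (shf1 j t) = sgood w \<pi> t" for t
    by (cases t) auto
  then show "good w \<pi> R \<Longrightarrow> good w \<pi> (shf j R)" unfolding good_def shf_def by auto
qed
lemma good_par: "good w \<pi> R \<Longrightarrow> even (\<pi> + \<pi>') \<Longrightarrow> good w \<pi>' R"
proof -
  have "sgood w \<pi> t \<Longrightarrow> even (\<pi> + \<pi>') \<Longrightarrow> sgood w \<pi>' t" for t
    by (cases t) (auto simp: even_add)
  then show "good w \<pi> R \<Longrightarrow> even (\<pi> + \<pi>') \<Longrightarrow> good w \<pi>' R" by (auto simp: good_def)
qed
lemma good_lmul:
  assumes "good w1 \<pi>1 R" "good w2 \<pi>2 S"
  shows "good (w1 + w2) (\<pi>1 + \<pi>2) (lmul R S)"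
proof -
  have "sgood (w1 + w2) (\<pi>1 + \<pi>2) (tmul t1 t2)" if "sgood w1 \<pi>1 t1" "sgood w2 \<pi>2 t2" for t1 t2
  proof -
    obtain k1 c1 as1 e1 where t1: "t1 = (k1, (c1, as1, e1))" by (cases t1) auto
    obtain k2 c2 as2 e2 where t2: "t2 = (k2, (c2, as2, e2))" by (cases t2) auto
    have a1: "mnm_w (c1, as1, e1) = w1" "even (mnm_w (c1, as1, e1) + mnm_nw (c1, as1, e1) + mnm_deg (c1, as1, e1) + \<pi>1)"
      using that(1) unfolding t1 sgood.simps by blast+
    have a2: "mnm_w (c2, as2, e2) = w2" "even (mnm_w (c2, as2, e2) + mnm_nw (c2, as2, e2) + mnm_deg (c2, as2, e2) + \<pi>2)"
      using that(2) unfolding t2 sgood.simps by blast+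
    have "mnm_w (c1 * c2, as1 @ as2, \<lambda>\<alpha>. e1 \<alpha> + e2 \<alpha>) + mnm_nw (c1 * c2, as1 @ as2, \<lambda>\<alpha>. e1 \<alpha> + e2 \<alpha>)
        + mnm_deg (c1 * c2, as1 @ as2, \<lambda>\<alpha>. e1 \<alpha> + e2 \<alpha>) + (\<pi>1 + \<pi>2)
       = (mnm_w (c1, as1, e1) + mnm_nw (c1, as1, e1) + mnm_deg (c1, as1, e1) + \<pi>1)
         + (mnm_w (c2, as2, e2) + mnm_nw (c2, as2, e2) + mnm_deg (c2, as2, e2) + \<pi>2)" (is "?L = _")
      by (simp add: mi_abs_add)
    then have ev: "even ?L" using dvd_add[OF a1(2) a2(2)] by (simp only:)
    moreover have "mnm_w (c1 * c2, as1 @ as2, \<lambda>\<alpha>. e1 \<alpha> + e2 \<alpha>) = mnm_w (c1, as1, e1) + mnm_w (c2, as2, e2)"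
      by simp
    ultimately show ?thesis unfolding t1 t2 tmul.simps sgood.simps using a1(1) a2(1) by simp
  qed
  note inner = this
  show ?thesis unfolding good_def
  proof
    fix t assume "t \<in> set (lmul R S)"
    then obtain t1 t2 where t: "t1 \<in> set R" "t2 \<in> set S" "t = tmul t1 t2"
      unfolding lmul_def by auto
    then show "sgood (w1 + w2) (\<pi>1 + \<pi>2) t"
      using inner assms unfolding good_def by blast
  qed
qed


lemma dd_line0:
  fixes f :: "'n::finite pt \<Rightarrow> real"
  assumes "f differentiable (at p)"
  shows "((\<lambda>s. f (p + s *\<^sub>R dvec d)) has_real_derivative dd d f p) (at 0)"
  using dd_line_real[of f p 0 d] assms by simp

lemma sqrt_powi_deriv:
  assumes Q: "(Q has_real_derivative Q') (at 0)" and pos: "Q 0 > 0"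
  shows "((\<lambda>s. sqrt (Q s) powi (- k)) has_real_derivative
          (- of_int k / 2) * sqrt (Q 0) powi (- k - 2) * Q') (at 0)"
proof -
  have S: "((\<lambda>s. sqrt (Q s)) has_real_derivative inverse (sqrt (Q 0)) / 2 * Q') (at 0)"
    using DERIV_chain2[OF DERIV_real_sqrt[OF pos] Q] .
  have N: "sqrt (Q 0) \<noteq> 0" using pos by simp
  have "((\<lambda>s. sqrt (Q s) powi (- k)) has_real_derivative
          of_int (- k) * sqrt (Q 0) powi (- k - 1) * (inverse (sqrt (Q 0)) / 2 * Q')) (at 0)"
    using DERIV_power_int[OF S, of "- k"] N by simp
  moreover have "sqrt (Q 0) powi (- k - 1) * inverse (sqrt (Q 0)) = sqrt (Q 0) powi (- k - 2)"
  proof -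
    have e: "- k - 2 = (- k - 1) + (- 1)" by simp
    have "sqrt (Q 0) powi (- k - 2) = sqrt (Q 0) powi (- k - 1) * sqrt (Q 0) powi (- 1)"
      unfolding e by (rule power_int_add) (use N in simp)
    then show ?thesis by (simp only: power_int_minus1_right)
  qed
  ultimately show ?thesis
    by (simp add: algebra_simps)
qed

fun dprods :: "('a \<Rightarrow> 'a) \<Rightarrow> 'a list \<Rightarrow> 'a list list" where
  "dprods f [] = []"
| "dprods f (a # as) = (f a # as) # map (Cons a) (dprods f as)"

lemma xpow_unit: "xpow (unit \<alpha>) \<xi> = \<xi> $ \<alpha>"
proof -
  have "xpow (unit \<alpha>) \<xi> = (\<Prod>\<gamma>\<in>UNIV. if \<gamma> = \<alpha> then \<xi> $ \<gamma> else 1)"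
    unfolding xpow_def unit_def by (rule prod.cong) auto
  then show ?thesis by simp
qed

fun dxt :: "('n::{finite,linorder}) option \<Rightarrow> 'n st \<Rightarrow> 'n st list" where
  "dxt D (k, (c, as, e)) =
     concat (map (\<lambda>\<alpha>. map (\<lambda>\<beta>. (k + 2, (c * complex_of_real (- of_int k / 2),
         datm D (gia \<alpha> \<beta>) # as, \<lambda>\<gamma>. e \<gamma> + unit \<alpha> \<gamma> + unit \<beta> \<gamma>))) ul) ul)
     @ map (\<lambda>bs. (k, (c, bs, e))) (dprods (datm D) as)"

definition dx :: "('n::{finite,linorder}) option \<Rightarrow> 'n st list \<Rightarrow> 'n st list" where
  "dx D R = concat (map (dxt D) R)"

lemma of_real_sum_list: "complex_of_real (\<Sum>x\<leftarrow>xs. f x) = (\<Sum>x\<leftarrow>xs. complex_of_real (f x))"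
  by (induction xs) auto

lemma lv_map: "lv g (map h ys) p \<xi> = (\<Sum>y\<leftarrow>ys. sv g (h y) p \<xi>)"
  by (simp add: lv_def o_def)

lemma xpow_2units: "xpow (\<lambda>\<gamma>. e \<gamma> + unit \<alpha> \<gamma> + unit \<beta> \<gamma>) \<xi> = xpow e \<xi> * (\<xi> $ \<alpha> * \<xi> $ \<beta>)"
proof -
  have "xpow (\<lambda>\<gamma>. e \<gamma> + unit \<alpha> \<gamma> + unit \<beta> \<gamma>) \<xi> = xpow (\<lambda>\<gamma>. e \<gamma> + unit \<alpha> \<gamma>) \<xi> * xpow (unit \<beta>) \<xi>"
    using xpow_add[of "\<lambda>\<gamma>. e \<gamma> + unit \<alpha> \<gamma>" "unit \<beta>" \<xi>] by simp
  also have "\<dots> = xpow e \<xi> * \<xi> $ \<alpha> * \<xi> $ \<beta>"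
    using xpow_add[of e "unit \<alpha>" \<xi>] by (simp add: xpow_unit)
  finally show ?thesis by simp
qed

fun dxit :: "'n::{finite,linorder} \<Rightarrow> 'n st \<Rightarrow> 'n st list" where
  "dxit \<gamma> (k, (c, as, e)) =
     map (\<lambda>\<beta>. (k + 2, (c * complex_of_real (- of_int k / 2), gia \<gamma> \<beta> # as, \<lambda>\<alpha>. e \<alpha> + unit \<beta> \<alpha>))) ul
   @ map (\<lambda>\<beta>. (k + 2, (c * complex_of_real (- of_int k / 2), gia \<beta> \<gamma> # as, \<lambda>\<alpha>. e \<alpha> + unit \<beta> \<alpha>))) ul
   @ (if e \<gamma> = 0 then [] else [(k, (c * of_nat (e \<gamma>), as, e(\<gamma> := e \<gamma> - 1)))])"

definition dxi :: "'n::{finite,linorder} \<Rightarrow> 'n st list \<Rightarrow> 'n st list" where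
  "dxi \<gamma> R = concat (map (dxit \<gamma>) R)"

lemma comp_deriv: "((\<lambda>s. (\<xi> + s *\<^sub>R axis \<gamma> 1) $ \<alpha>) has_real_derivative (if \<alpha> = \<gamma> then 1 else 0)) (at s0)"
proof -
  have "(\<lambda>s. (\<xi> + s *\<^sub>R axis \<gamma> 1) $ \<alpha>) = (\<lambda>s. \<xi> $ \<alpha> + s * (if \<alpha> = \<gamma> then 1 else 0))"
    by (auto simp: axis_def)
  then show ?thesis by (auto intro!: derivative_eq_intros)
qed

lemma xpow_deriv:
  fixes \<xi> :: "real^'n::finite"
  shows "((\<lambda>s. xpow e (\<xi> + s *\<^sub>R axis \<gamma> 1)) has_real_derivative
     (if e \<gamma> = 0 then 0 else of_nat (e \<gamma>) * xpow (e(\<gamma> := e \<gamma> - 1)) \<xi>)) (at 0)"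
proof -
  define C where "C = (\<Prod>\<alpha>\<in>UNIV - {\<gamma>}. (\<xi> $ \<alpha>) ^ (e \<alpha>))"
  have eq: "xpow e (\<xi> + s *\<^sub>R axis \<gamma> 1) = (\<xi> $ \<gamma> + s) ^ (e \<gamma>) * C" for s
  proof -
    have "xpow e (\<xi> + s *\<^sub>R axis \<gamma> 1) = ((\<xi> + s *\<^sub>R axis \<gamma> 1) $ \<gamma>) ^ (e \<gamma>) *
        (\<Prod>\<alpha>\<in>UNIV - {\<gamma>}. ((\<xi> + s *\<^sub>R axis \<gamma> 1) $ \<alpha>) ^ (e \<alpha>))"
      unfolding xpow_def by (rule prod.remove) auto
    also have "(\<Prod>\<alpha>\<in>UNIV - {\<gamma>}. ((\<xi> + s *\<^sub>R axis \<gamma> 1) $ \<alpha>) ^ (e \<alpha>)) = C"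
      unfolding C_def by (rule prod.cong) (auto simp: axis_def)
    finally show ?thesis by (simp add: axis_def)
  qed
  have D: "((\<lambda>s. (\<xi> $ \<gamma> + s) ^ (e \<gamma>) * C) has_real_derivative
           of_nat (e \<gamma>) * (1 * (\<xi> $ \<gamma> + 0) ^ (e \<gamma> - Suc 0)) * C) (at 0)"
    by (intro DERIV_cmult_right DERIV_power DERIV_add_const DERIV_ident)
  have x2: "xpow (e(\<gamma> := e \<gamma> - 1)) \<xi> = (\<xi> $ \<gamma>) ^ (e \<gamma> - 1) * C"
  proof -
    have "xpow (e(\<gamma> := e \<gamma> - 1)) \<xi> = (\<xi> $ \<gamma>) ^ ((e(\<gamma> := e \<gamma> - 1)) \<gamma>) *
        (\<Prod>\<alpha>\<in>UNIV - {\<gamma>}. (\<xi> $ \<alpha>) ^ ((e(\<gamma> := e \<gamma> - 1)) \<alpha>))"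
      unfolding xpow_def by (rule prod.remove) auto
    also have "(\<Prod>\<alpha>\<in>UNIV - {\<gamma>}. (\<xi> $ \<alpha>) ^ ((e(\<gamma> := e \<gamma> - 1)) \<alpha>)) = C"
      unfolding C_def by (rule prod.cong) auto
    finally show ?thesis by (simp only: fun_upd_same)
  qed
  show ?thesis
    unfolding eq using D by (rule DERIV_cong) (auto simp: x2[unfolded One_nat_def])
qed

context
  fixes U :: "('n::{finite,linorder}) pt set" and g :: "'n metric"
  assumes tm: "tang_metric U g"
begin

lemma q2_deriv_x:
  assumes p: "p \<in> U"
  shows "((\<lambda>s. q2 g (p + s *\<^sub>R dvec D) \<xi>) has_real_derivative
          (\<Sum>\<alpha>\<in>UNIV. \<Sum>\<beta>\<in>UNIV. dd D (ginv g \<alpha> \<beta>) p * \<xi>$\<alpha> * \<xi>$\<beta>)) (at 0)"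
  unfolding q2_def
  by (intro DERIV_sum DERIV_cmult_right dd_line0 ginv_diff[OF tm p])

lemma aval_deriv_x:
  assumes p: "p \<in> U"
  shows "((\<lambda>s. aval g as (p + s *\<^sub>R dvec D)) has_real_derivative
          (\<Sum>bs\<leftarrow>dprods (datm D) as. aval g bs p)) (at 0)"
proof (induction as)
  case Nil
  then show ?case by (simp add: aval_def)
next
  case (Cons a as)
  have A: "((\<lambda>s. atm_val g a (p + s *\<^sub>R dvec D)) has_real_derivative atm_val g (datm D a) p) (at 0)"
    using dd_line0[OF atm_diff[OF tm p]] atm_dd[OF tm p] by metis
  have "((\<lambda>s. atm_val g a (p + s *\<^sub>R dvec D) * aval g as (p + s *\<^sub>R dvec D)) has_real_derivative
     atm_val g (datm D a) p * aval g as p + atm_val g a p * (\<Sum>bs\<leftarrow>dprods (datm D) as. aval g bs p)) (at 0)"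
    using DERIV_mult[OF A Cons.IH] by (simp add: mult.commute)
  moreover have "(\<Sum>bs\<leftarrow>map (Cons a) (dprods (datm D) as). aval g bs p) = atm_val g a p * (\<Sum>bs\<leftarrow>dprods (datm D) as. aval g bs p)"
    by (simp add: aval_def o_def sum_list_const_mult)
  ultimately show ?case by (simp add: aval_def)
qed

lemma sv_deriv_x:
  assumes p: "p \<in> U" and \<xi>: "\<xi> \<noteq> 0"
  shows "((\<lambda>s. sv g t (p + s *\<^sub>R dvec D) \<xi>) has_vector_derivative lv g (dxt D t) p \<xi>) (at 0)"
proof -
  obtain k c as e where t: "t = (k, (c, as, e))" by (cases t) auto
  define N where "N = nq g p \<xi>"
  define A where "A = aval g as p"
  define X where "X = xpow e \<xi>"
  define Q' where "Q' = (\<Sum>\<alpha>\<in>UNIV. \<Sum>\<beta>\<in>UNIV. dd D (ginv g \<alpha> \<beta>) p * \<xi>$\<alpha> * \<xi>$\<beta>)"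
  define A' where "A' = (\<Sum>bs\<leftarrow>dprods (datm D) as. aval g bs p)"
  have qpos: "q2 g p \<xi> > 0" using q2_pos[OF tm p \<xi>] .
  have DN: "((\<lambda>s. nq g (p + s *\<^sub>R dvec D) \<xi> powi (- k)) has_real_derivative
          (- of_int k / 2) * N powi (- k - 2) * Q') (at 0)"
    unfolding nq_def N_def Q'_def
    using sqrt_powi_deriv[OF q2_deriv_x[OF p, of D \<xi>], of k] qpos by simp
  have DA: "((\<lambda>s. aval g as (p + s *\<^sub>R dvec D)) has_real_derivative A') (at 0)"
    unfolding A'_def by (rule aval_deriv_x[OF p])
  have DF: "((\<lambda>s. nq g (p + s *\<^sub>R dvec D) \<xi> powi (- k) * aval g as (p + s *\<^sub>R dvec D) * xpow e \<xi>)
      has_real_derivative ((- of_int k / 2) * N powi (- k - 2) * Q' * A + A' * N powi (- k)) * X) (at 0)"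
    using DERIV_cmult_right[OF DERIV_mult[OF DN DA], of "xpow e \<xi>"]
    by (simp add: N_def A_def X_def)
  have V: "((\<lambda>s. sv g t (p + s *\<^sub>R dvec D) \<xi>) has_vector_derivative
       c * complex_of_real (((- of_int k / 2) * N powi (- k - 2) * Q' * A + A' * N powi (- k)) * X)) (at 0)"
    unfolding t sv.simps by (intro has_vector_derivative_mult_right has_vector_derivative_of_real DF)
  have ginv_atm: "atm_val g (datm D (gia \<alpha> \<beta>)) p = dd D (ginv g \<alpha> \<beta>) p" for \<alpha> \<beta>
    using atm_dd[OF tm p, of D "gia \<alpha> \<beta>"] by (simp add: atm_val_gia)
  have P1: "lv g (concat (map (\<lambda>\<alpha>. map (\<lambda>\<beta>. (k + 2, (c * complex_of_real (- of_int k / 2),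
         datm D (gia \<alpha> \<beta>) # as, \<lambda>\<gamma>. e \<gamma> + unit \<alpha> \<gamma> + unit \<beta> \<gamma>))) ul) ul)) p \<xi>
      = c * complex_of_real ((- of_int k / 2) * N powi (- k - 2) * Q' * A * X)"
  proof -
    have "lv g (concat (map (\<lambda>\<alpha>. map (\<lambda>\<beta>. (k + 2, (c * complex_of_real (- of_int k / 2),
         datm D (gia \<alpha> \<beta>) # as, \<lambda>\<gamma>. e \<gamma> + unit \<alpha> \<gamma> + unit \<beta> \<gamma>))) ul) ul)) p \<xi>
      = (\<Sum>\<alpha>\<in>UNIV. \<Sum>\<beta>\<in>UNIV. c * complex_of_real ((- of_int k / 2) * N powi (- k - 2) * A * X *
            (dd D (ginv g \<alpha> \<beta>) p * \<xi>$\<alpha> * \<xi>$\<beta>)))"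
      unfolding lv_concat lv_map sum_ul
      by (intro sum.cong refl) (simp add: ginv_atm xpow_2units aval_def N_def A_def X_def mult_ac)
    also have "\<dots> = c * complex_of_real ((- of_int k / 2) * N powi (- k - 2) * A * X * Q')"
      by (simp add: Q'_def sum_distrib_left)
    finally show ?thesis by (simp add: mult_ac)
  qed
  have P2: "lv g (map (\<lambda>bs. (k, (c, bs, e))) (dprods (datm D) as)) p \<xi> = c * complex_of_real (A' * N powi (- k) * X)"
    unfolding lv_map A'_def
    by (simp add: N_def X_def sum_list_const_mult sum_list_mult_const mult_ac of_real_sum_list)
  have "lv g (dxt D t) p \<xi> = c * complex_of_real (((- of_int k / 2) * N powi (- k - 2) * Q' * A + A' * N powi (- k)) * X)"
    unfolding t dxt.simps lv_append P1 P2 by (simp add: algebra_simps)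
  then show ?thesis using V by simp
qed

lemma lv_deriv_x:
  assumes p: "p \<in> U" and \<xi>: "\<xi> \<noteq> 0"
  shows "((\<lambda>s. lv g R (p + s *\<^sub>R dvec D) \<xi>) has_vector_derivative lv g (dx D R) p \<xi>) (at 0)"
proof (induction R)
  case Nil
  then show ?case by (simp add: dx_def lv_def)
next
  case (Cons t R)
  show ?case
    unfolding lv_Cons dx_def list.map concat.simps lv_append
    using has_vector_derivative_add[OF sv_deriv_x[OF p \<xi>, of t D] Cons.IH[unfolded dx_def]] .
qed

lemma dd_lv:
  assumes p: "p \<in> U" and \<xi>: "\<xi> \<noteq> 0"
    and f: "\<forall>q\<in>U. f q \<xi> = lv g R q \<xi>"
  shows "dd D (\<lambda>q. f q \<xi>) p = lv g (dx D R) p \<xi>"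
proof -
  have "dd D (\<lambda>q. f q \<xi>) p = dd D (\<lambda>q. lv g R q \<xi>) p"
    by (rule dd_local[OF U_open[OF tm] p]) (use f in simp)
  also have "\<dots> = lv g (dx D R) p \<xi>"
    unfolding dd_def by (rule vector_derivative_at[OF lv_deriv_x[OF p \<xi>]])
  finally show ?thesis .
qed

lemma q2_deriv_xi:
  shows "((\<lambda>s. q2 g p (\<xi> + s *\<^sub>R axis \<gamma> 1)) has_real_derivative
          (\<Sum>\<beta>\<in>UNIV. ginv g \<gamma> \<beta> p * \<xi>$\<beta>) + (\<Sum>\<beta>\<in>UNIV. ginv g \<beta> \<gamma> p * \<xi>$\<beta>)) (at 0)"
proof -
  have "((\<lambda>s. q2 g p (\<xi> + s *\<^sub>R axis \<gamma> 1)) has_real_derivative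
      (\<Sum>\<alpha>\<in>UNIV. \<Sum>\<beta>\<in>UNIV. ginv g \<alpha> \<beta> p * (if \<alpha> = \<gamma> then 1 else 0) * \<xi>$\<beta>
              + ginv g \<alpha> \<beta> p * (if \<beta> = \<gamma> then 1 else 0) * \<xi>$\<alpha>)) (at 0)"
    unfolding q2_def
  proof (intro DERIV_sum)
    fix \<alpha> \<beta>
    show "((\<lambda>s. ginv g \<alpha> \<beta> p * (\<xi> + s *\<^sub>R axis \<gamma> 1) $ \<alpha> * (\<xi> + s *\<^sub>R axis \<gamma> 1) $ \<beta>) has_real_derivative
        ginv g \<alpha> \<beta> p * (if \<alpha> = \<gamma> then 1 else 0) * \<xi>$\<beta> + ginv g \<alpha> \<beta> p * (if \<beta> = \<gamma> then 1 else 0) * \<xi>$\<alpha>) (at 0)"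
      by (rule DERIV_cong[OF DERIV_mult[OF DERIV_cmult[OF comp_deriv] comp_deriv]]) (simp add: mult_ac)
  qed
  moreover have "(\<Sum>\<alpha>\<in>UNIV. \<Sum>\<beta>\<in>UNIV. ginv g \<alpha> \<beta> p * (if \<alpha> = \<gamma> then 1 else 0) * \<xi>$\<beta>
              + ginv g \<alpha> \<beta> p * (if \<beta> = \<gamma> then 1 else 0) * \<xi>$\<alpha>)
     = (\<Sum>\<beta>\<in>UNIV. ginv g \<gamma> \<beta> p * \<xi>$\<beta>) + (\<Sum>\<beta>\<in>UNIV. ginv g \<beta> \<gamma> p * \<xi>$\<beta>)"
  proof -
    have a: "(\<Sum>\<alpha>\<in>UNIV. \<Sum>\<beta>\<in>UNIV. ginv g \<alpha> \<beta> p * (if \<alpha> = \<gamma> then 1 else 0) * \<xi>$\<beta>)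
        = (\<Sum>\<beta>\<in>UNIV. ginv g \<gamma> \<beta> p * \<xi>$\<beta>)"
    proof -
      have "(\<Sum>\<alpha>\<in>UNIV. \<Sum>\<beta>\<in>UNIV. ginv g \<alpha> \<beta> p * (if \<alpha> = \<gamma> then 1 else 0) * \<xi>$\<beta>)
          = (\<Sum>\<alpha>\<in>UNIV. if \<alpha> = \<gamma> then (\<Sum>\<beta>\<in>UNIV. ginv g \<alpha> \<beta> p * \<xi>$\<beta>) else 0)"
        by (rule sum.cong) auto
      then show ?thesis by simp
    qed
    have b: "(\<Sum>\<alpha>\<in>UNIV. \<Sum>\<beta>\<in>UNIV. ginv g \<alpha> \<beta> p * (if \<beta> = \<gamma> then 1 else 0) * \<xi>$\<alpha>)
        = (\<Sum>\<beta>\<in>UNIV. ginv g \<beta> \<gamma> p * \<xi>$\<beta>)"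
    proof -
      have "(\<Sum>\<alpha>\<in>UNIV. \<Sum>\<beta>\<in>UNIV. ginv g \<alpha> \<beta> p * (if \<beta> = \<gamma> then 1 else 0) * \<xi>$\<alpha>)
          = (\<Sum>\<alpha>\<in>UNIV. \<Sum>\<beta>\<in>UNIV. if \<beta> = \<gamma> then ginv g \<alpha> \<beta> p * \<xi>$\<alpha> else 0)"
        by (intro sum.cong) auto
      then show ?thesis by simp
    qed
    show ?thesis by (simp only: sum.distrib a b)
  qed
  ultimately show ?thesis by simp
qed

lemma sv_deriv_xi:
  assumes p: "p \<in> U" and \<xi>: "\<xi> \<noteq> 0"
  shows "((\<lambda>s. sv g t p (\<xi> + s *\<^sub>R axis \<gamma> 1)) has_vector_derivative lv g (dxit \<gamma> t) p \<xi>) (at 0)"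
proof -
  obtain k c as e where t: "t = (k, (c, as, e))" by (cases t) auto
  define N where "N = nq g p \<xi>"
  define A where "A = aval g as p"
  define X where "X = xpow e \<xi>"
  define S1 where "S1 = (\<Sum>\<beta>\<in>UNIV. ginv g \<gamma> \<beta> p * \<xi>$\<beta>)"
  define S2 where "S2 = (\<Sum>\<beta>\<in>UNIV. ginv g \<beta> \<gamma> p * \<xi>$\<beta>)"
  define Xd where "Xd = (if e \<gamma> = 0 then 0 else of_nat (e \<gamma>) * xpow (e(\<gamma> := e \<gamma> - 1)) \<xi>)"
  have qpos: "q2 g p \<xi> > 0" using q2_pos[OF tm p \<xi>] .
  have DN: "((\<lambda>s. nq g p (\<xi> + s *\<^sub>R axis \<gamma> 1) powi (- k)) has_real_derivative
          (- of_int k / 2) * N powi (- k - 2) * (S1 + S2)) (at 0)"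
    unfolding nq_def N_def S1_def S2_def
    using sqrt_powi_deriv[OF q2_deriv_xi[of p \<xi> \<gamma>], of k] qpos by simp
  have DX: "((\<lambda>s. xpow e (\<xi> + s *\<^sub>R axis \<gamma> 1)) has_real_derivative Xd) (at 0)"
    unfolding Xd_def by (rule xpow_deriv)
  have DF: "((\<lambda>s. nq g p (\<xi> + s *\<^sub>R axis \<gamma> 1) powi (- k) * aval g as p * xpow e (\<xi> + s *\<^sub>R axis \<gamma> 1))
      has_real_derivative ((- of_int k / 2) * N powi (- k - 2) * (S1 + S2) * X + Xd * N powi (- k)) * A) (at 0)"
  proof -
    have "((\<lambda>s. nq g p (\<xi> + s *\<^sub>R axis \<gamma> 1) powi (- k) * xpow e (\<xi> + s *\<^sub>R axis \<gamma> 1) * aval g as p)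
      has_real_derivative ((- of_int k / 2) * N powi (- k - 2) * (S1 + S2) * X + Xd * N powi (- k)) * A) (at 0)"
      using DERIV_cmult_right[OF DERIV_mult[OF DN DX], of "aval g as p"]
      by (simp add: N_def A_def X_def)
    then show ?thesis by (simp add: mult_ac)
  qed
  have V: "((\<lambda>s. sv g t p (\<xi> + s *\<^sub>R axis \<gamma> 1)) has_vector_derivative
       c * complex_of_real (((- of_int k / 2) * N powi (- k - 2) * (S1 + S2) * X + Xd * N powi (- k)) * A)) (at 0)"
    unfolding t sv.simps by (intro has_vector_derivative_mult_right has_vector_derivative_of_real DF)
  have xu: "xpow (\<lambda>\<alpha>. e \<alpha> + unit \<beta> \<alpha>) \<xi> = X * \<xi> $ \<beta>" for \<beta>
    using xpow_add[of e "unit \<beta>" \<xi>] by (simp add: xpow_unit X_def)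
  have P1: "lv g (map (\<lambda>\<beta>. (k + 2, (c * complex_of_real (- of_int k / 2), gia \<gamma> \<beta> # as, \<lambda>\<alpha>. e \<alpha> + unit \<beta> \<alpha>))) ul) p \<xi>
      = c * complex_of_real ((- of_int k / 2) * N powi (- k - 2) * A * X * S1)"
  proof -
    have "lv g (map (\<lambda>\<beta>. (k + 2, (c * complex_of_real (- of_int k / 2), gia \<gamma> \<beta> # as, \<lambda>\<alpha>. e \<alpha> + unit \<beta> \<alpha>))) ul) p \<xi>
      = (\<Sum>\<beta>\<in>UNIV. c * complex_of_real ((- of_int k / 2) * N powi (- k - 2) * A * X * (ginv g \<gamma> \<beta> p * \<xi>$\<beta>)))"
      unfolding lv_map sum_ul
      by (intro sum.cong refl) (simp add: atm_val_gia xu aval_def N_def A_def mult_ac)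
    also have "\<dots> = c * complex_of_real ((- of_int k / 2) * N powi (- k - 2) * A * X * S1)"
      by (simp add: S1_def sum_distrib_left)
    finally show ?thesis .
  qed
  have P2: "lv g (map (\<lambda>\<beta>. (k + 2, (c * complex_of_real (- of_int k / 2), gia \<beta> \<gamma> # as, \<lambda>\<alpha>. e \<alpha> + unit \<beta> \<alpha>))) ul) p \<xi>
      = c * complex_of_real ((- of_int k / 2) * N powi (- k - 2) * A * X * S2)"
  proof -
    have "lv g (map (\<lambda>\<beta>. (k + 2, (c * complex_of_real (- of_int k / 2), gia \<beta> \<gamma> # as, \<lambda>\<alpha>. e \<alpha> + unit \<beta> \<alpha>))) ul) p \<xi>
      = (\<Sum>\<beta>\<in>UNIV. c * complex_of_real ((- of_int k / 2) * N powi (- k - 2) * A * X * (ginv g \<beta> \<gamma> p * \<xi>$\<beta>)))"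
      unfolding lv_map sum_ul
      by (intro sum.cong refl) (simp add: atm_val_gia xu aval_def N_def A_def mult_ac)
    also have "\<dots> = c * complex_of_real ((- of_int k / 2) * N powi (- k - 2) * A * X * S2)"
      by (simp add: S2_def sum_distrib_left)
    finally show ?thesis .
  qed
  have P3: "lv g (if e \<gamma> = 0 then [] else [(k, (c * of_nat (e \<gamma>), as, e(\<gamma> := e \<gamma> - 1)))]) p \<xi>
      = c * complex_of_real (Xd * N powi (- k) * A)"
    by (simp add: Xd_def lv_def N_def A_def mult_ac)
  have "lv g (dxit \<gamma> t) p \<xi> = c * complex_of_real (((- of_int k / 2) * N powi (- k - 2) * (S1 + S2) * X + Xd * N powi (- k)) * A)"
    unfolding t dxit.simps lv_append P1 P2 P3 by (simp add: algebra_simps)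
  then show ?thesis using V by simp
qed

lemma lv_deriv_xi:
  assumes p: "p \<in> U" and \<xi>: "\<xi> \<noteq> 0"
  shows "((\<lambda>s. lv g R p (\<xi> + s *\<^sub>R axis \<gamma> 1)) has_vector_derivative lv g (dxi \<gamma> R) p \<xi>) (at 0)"
proof (induction R)
  case Nil
  then show ?case by (simp add: dxi_def lv_def)
next
  case (Cons t R)
  show ?case
    unfolding lv_Cons dxi_def list.map concat.simps lv_append
    using has_vector_derivative_add[OF sv_deriv_xi[OF p \<xi>, of t \<gamma>] Cons.IH[unfolded dxi_def]] .
qed

lemma pdxi_lv:
  assumes p: "p \<in> U" and \<xi>: "\<xi> \<noteq> 0"
    and f: "\<forall>\<xi>'. \<xi>' \<noteq> 0 \<longrightarrow> f p \<xi>' = lv g R p \<xi>'"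
  shows "pdxi \<gamma> f p \<xi> = lv g (dxi \<gamma> R) p \<xi>"
proof -
  have op: "open (UNIV - {0 :: real^'n::{finite,linorder}})" by (simp add: open_Diff)
  have "pdxi \<gamma> f p \<xi> = vector_derivative (\<lambda>s. lv g R p (\<xi> + s *\<^sub>R axis \<gamma> 1)) (at 0)"
    unfolding pdxi_def
  proof (rule vector_derivative_cong_eq)
    show "\<forall>\<^sub>F x in nhds 0. x \<in> UNIV \<longrightarrow> f p (\<xi> + x *\<^sub>R axis \<gamma> 1) = lv g R p (\<xi> + x *\<^sub>R axis \<gamma> 1)"
    proof -
      have ev: "\<forall>\<^sub>F s in nhds 0. \<xi> + s *\<^sub>R axis \<gamma> 1 \<in> UNIV - {0}"
        by (rule ev_line[OF op]) (use \<xi> in simp)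
      then show ?thesis by eventually_elim (use f in auto)
    qed
  qed auto
  also have "\<dots> = lv g (dxi \<gamma> R) p \<xi>"
    by (rule vector_derivative_at[OF lv_deriv_xi[OF p \<xi>]])
  finally show ?thesis .
qed

end


section \<open>Goodness of derivatives\<close>

lemma dprods_w:
  "bs \<in> set (dprods (datm D) as) \<Longrightarrow>
     sum_list (map atm_w bs) = Suc (sum_list (map atm_w as)) \<and>
     sum_list (map atm_nw bs) = sum_list (map atm_nw as) + (if D = None then 1 else 0)"
  by (induction as arbitrary: bs) (auto simp: atm_w_datm atm_nw_datm mi_abs_upd)

lemma mi_abs_2units: "mi_abs (\<lambda>\<gamma>. e \<gamma> + unit \<alpha> \<gamma> + unit \<beta> \<gamma>) = mi_abs e + 2"
  using mi_abs_add[of "\<lambda>\<gamma>. e \<gamma> + unit \<alpha> \<gamma>" "unit \<beta>"] mi_abs_add[of e "unit \<alpha>"]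
  by (simp add: mi_abs_unit)

lemma mi_abs_1unit: "mi_abs (\<lambda>\<gamma>. e \<gamma> + unit \<alpha> \<gamma>) = mi_abs e + 1"
  using mi_abs_add[of e "unit \<alpha>"] by (simp add: mi_abs_unit)

lemma mi_abs_dec: fixes e :: "'n::{finite,linorder} \<Rightarrow> nat" shows "e \<gamma> \<noteq> 0 \<Longrightarrow> Suc (mi_abs (e(\<gamma> := e \<gamma> - 1))) = mi_abs e"
proof -
  assume h: "e \<gamma> \<noteq> 0"
  have "(e(\<gamma> := e \<gamma> - 1))(\<gamma> := Suc ((e(\<gamma> := e \<gamma> - 1)) \<gamma>)) = e"
    using h by (auto simp: fun_eq_iff)
  then show ?thesis using mi_abs_upd[of "e(\<gamma> := e \<gamma> - 1)" \<gamma>] by simp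
qed

lemma sgood_iff: "sgood w \<pi> (k, (c, as, e)) \<longleftrightarrow>
   sum_list (map atm_w as) = w \<and> 2 dvd (sum_list (map atm_w as) + sum_list (map atm_nw as) + mi_abs e + \<pi>)"
  by simp

lemma par_fin:
  assumes "2 dvd (W + NW + E + (\<pi>::nat))" "2 dvd (1 + x + y + \<delta>)"
  shows "2 dvd (Suc W + (NW + x) + (E + y) + (\<pi> + \<delta>))"
  using assms by presburger

lemma par_fin0:
  assumes "2 dvd (W + NW + E + (\<pi>::nat))"
  shows "2 dvd (W + NW + (E + 1) + Suc \<pi>)"
  using assms by presburger

lemma par_fin1:
  assumes "2 dvd (W + NW + E + (\<pi>::nat))" "Suc E' = E"
  shows "2 dvd (W + NW + E' + Suc \<pi>)"
  using assms by presburger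

lemma good_dx:
  assumes "good w \<pi> R"
  shows "good (Suc w) (\<pi> + (if D = None then 0 else 1)) (dx D R)"
proof -
  have "sgood (Suc w) (\<pi> + (if D = None then 0 else 1)) t'" if t: "sgood w \<pi> t" and t': "t' \<in> set (dxt D t)" for t t'
  proof -
    obtain k c as e where te: "t = (k, (c, as, e))" by (cases t) auto
    define W where "W = sum_list (map atm_w as)"
    define NW where "NW = sum_list (map atm_nw as)"
    define x where "x = (if D = None then 1 else (0::nat))"
    define \<delta> where "\<delta> = (if D = None then 0 else (1::nat))"
    have h: "W = w" "2 dvd (W + NW + mi_abs e + \<pi>)" using t unfolding te sgood_iff W_def NW_def by auto
    from t' consider (a) \<alpha> \<beta> where "t' = (k + 2, (c * complex_of_real (- of_int k / 2),
         datm D (gia \<alpha> \<beta>) # as, \<lambda>\<gamma>. e \<gamma> + unit \<alpha> \<gamma> + unit \<beta> \<gamma>))"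
      | (b) bs where "bs \<in> set (dprods (datm D) as)" "t' = (k, (c, bs, e))"
      unfolding te by auto
    then show ?thesis
    proof cases
      case a
      have w1: "sum_list (map atm_w (datm D (gia \<alpha> \<beta>) # as)) = Suc W"
        by (simp add: W_def atm_w_datm atm_w_gia)
      have nw1: "sum_list (map atm_nw (datm D (gia \<alpha> \<beta>) # as)) = NW + x"
        by (simp add: NW_def x_def atm_nw_datm atm_nw_gia)
      have ev: "2 dvd (1 + x + 2 + \<delta>)" by (simp add: x_def \<delta>_def)
      show ?thesis unfolding a sgood_iff w1 nw1 mi_abs_2units \<delta>_def[symmetric]
        using h par_fin[OF h(2) ev] by simp
    next
      case b
      have w1: "sum_list (map atm_w bs) = Suc W" and nw1: "sum_list (map atm_nw bs) = NW + x"
        using dprods_w[OF b(1)] by (simp_all add: W_def NW_def x_def)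
      have ev: "2 dvd (1 + x + 0 + \<delta>)" by (simp add: x_def \<delta>_def)
      show ?thesis unfolding b(2) sgood_iff w1 nw1 \<delta>_def[symmetric]
        using h par_fin[OF h(2) ev] by simp
    qed
  qed
  then show ?thesis using assms by (auto simp: good_def dx_def simp del: sgood.simps)
qed

lemma good_dxi:
  assumes "good w \<pi> R"
  shows "good w (Suc \<pi>) (dxi \<gamma> R)"
proof -
  have "sgood w (Suc \<pi>) t'" if t: "sgood w \<pi> t" and t': "t' \<in> set (dxit \<gamma> t)" for t t'
  proof -
    obtain k c as e where te: "t = (k, (c, as, e))" by (cases t) auto
    define W where "W = sum_list (map atm_w as)"
    define NW where "NW = sum_list (map atm_nw as)"
    have h: "W = w" "2 dvd (W + NW + mi_abs e + \<pi>)" using t unfolding te sgood_iff W_def NW_def by auto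
    from t' consider (a) \<beta> where "t' = (k + 2, (c * complex_of_real (- of_int k / 2), gia \<gamma> \<beta> # as, \<lambda>\<alpha>. e \<alpha> + unit \<beta> \<alpha>))"
      | (b) \<beta> where "t' = (k + 2, (c * complex_of_real (- of_int k / 2), gia \<beta> \<gamma> # as, \<lambda>\<alpha>. e \<alpha> + unit \<beta> \<alpha>))"
      | (c) "e \<gamma> \<noteq> 0" "t' = (k, (c * of_nat (e \<gamma>), as, e(\<gamma> := e \<gamma> - 1)))"
      unfolding te by (auto split: if_splits)
    then show ?thesis
    proof cases
      case a
      have w1: "sum_list (map atm_w (gia \<gamma> \<beta> # as)) = W" and nw1: "sum_list (map atm_nw (gia \<gamma> \<beta> # as)) = NW"
        by (simp_all add: W_def NW_def atm_w_gia atm_nw_gia)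
      show ?thesis unfolding a sgood_iff w1 nw1 mi_abs_1unit using h par_fin0[OF h(2)] by simp
    next
      case b
      have w1: "sum_list (map atm_w (gia \<beta> \<gamma> # as)) = W" and nw1: "sum_list (map atm_nw (gia \<beta> \<gamma> # as)) = NW"
        by (simp_all add: W_def NW_def atm_w_gia atm_nw_gia)
      show ?thesis unfolding b sgood_iff w1 nw1 mi_abs_1unit using h par_fin0[OF h(2)] by simp
    next
      case c
      show ?thesis unfolding c(2) sgood_iff W_def[symmetric] NW_def[symmetric]
        using h par_fin1[OF h(2) mi_abs_dec[of e \<gamma>, OF c(1)]] by simp
    qed
  qed
  then show ?thesis using assms by (auto simp: good_def dxi_def simp del: sgood.simps)
qed


definition SQ :: "('n::{finite,linorder}) st list" where "SQ = [(-1, (1, [], \<lambda>_. 0))]"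

lemma lv_SQ: "lv g SQ p \<xi> = sq g p \<xi>"
  by (simp add: SQ_def lv_def aval_def xpow_def sq_def nq_def)

lemma good_SQ: "good 0 0 SQ"
  by (simp add: good_def SQ_def mi_abs_zero)

definition Elist :: "('n::{finite,linorder}) st list" where
  "Elist = concat (map (\<lambda>\<alpha>. map (\<lambda>\<beta>. (0, (complex_of_real (- 1 / 2), [gia \<alpha> \<beta>, (False, \<alpha>, \<beta>, \<lambda>_. 0, 1)], \<lambda>_. 0))) ul) ul)"

lemma iterd_dn: "iterd (map Some (mi_list (\<lambda>_. 0)) @ [None]) h = dd None h"
  by (simp add: mi_list_zero iterd_Cons iterd_Nil)

lemma iterd_dx1: "iterd (map Some (mi_list (unit \<alpha>))) h = dd (Some \<alpha>) h"
  by (simp add: mi_list_unit iterd_Cons iterd_Nil)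

lemma atm_val_dn: "atm_val g (False, \<alpha>, \<beta>, \<lambda>_. 0, 1) p = dd None (g \<alpha> \<beta>) p"
  by (simp add: mi_list_zero iterd_Cons iterd_Nil)

lemma lv_Elist: "lv g Elist p \<xi> = complex_of_real (Efun g p)"
proof -
  have "lv g Elist p \<xi> = (\<Sum>\<alpha>\<in>UNIV. \<Sum>\<beta>\<in>UNIV. complex_of_real (- 1 / 2 * (ginv g \<alpha> \<beta> p * dd None (g \<alpha> \<beta>) p)))"
    unfolding Elist_def lv_concat lv_map sum_ul
    by (intro sum.cong refl) (simp add: aval_def xpow_def atm_val_gia iterd_dn)
  also have "\<dots> = complex_of_real (Efun g p)"
    by (simp add: Efun_def sum_distrib_left)
  finally show ?thesis .
qed

lemma good_Elist: "good 1 0 Elist"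
  by (auto simp: good_def Elist_def atm_w_gia atm_nw_gia mi_abs_zero)

definition Q1 :: "('n::{finite,linorder}) st list" where
  "Q1 = concat (map (\<lambda>\<alpha>. concat (map (\<lambda>\<beta>. concat (map (\<lambda>i. map (\<lambda>k.
          (0, (- \<i> * complex_of_real (1/2), [gia \<alpha> \<beta>, gia k i, (False, i, k, unit \<alpha>, 0)], unit \<beta>))) ul) ul)) ul)) ul)
      @ concat (map (\<lambda>\<alpha>. map (\<lambda>\<beta>. (0, (- \<i>, [(True, \<alpha>, \<beta>, unit \<alpha>, 0)], unit \<beta>))) ul) ul)"

lemma good_Q1: "good 1 0 Q1"
  by (auto simp: good_def Q1_def atm_w_gia atm_nw_gia mi_abs_unit)

lemma atm_val_dx1: "atm_val g (u, i, k, unit \<alpha>, 0) p = dd (Some \<alpha>) (if u then ginv g i k else g i k) p"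
  by (simp add: mi_list_unit iterd_Cons iterd_Nil)

context
  fixes U :: "('n::{finite,linorder}) pt set" and g :: "'n metric"
  assumes tm: "tang_metric U g"
begin

lemma lv_Q1:
  assumes p: "p \<in> U"
  shows "lv g Q1 p \<xi> = q1 g p \<xi>"
proof -
  have a: "lv g Q1 p \<xi> = - \<i> * complex_of_real (\<Sum>\<alpha>\<in>UNIV. \<Sum>\<beta>\<in>UNIV.
      (\<Sum>i\<in>UNIV. \<Sum>k\<in>UNIV. 1/2 * ginv g \<alpha> \<beta> p * (ginv g k i p * dd (Some \<alpha>) (g i k) p) * \<xi> $ \<beta>))
     + - \<i> * complex_of_real (\<Sum>\<alpha>\<in>UNIV. \<Sum>\<beta>\<in>UNIV. dd (Some \<alpha>) (ginv g \<alpha> \<beta>) p * \<xi> $ \<beta>)"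
    unfolding Q1_def lv_append lv_concat lv_map sum_ul
    by (simp add: aval_def xpow_unit atm_val_gia iterd_dx1 sum_distrib_left mult_ac)
  have "q1 g p \<xi> = - \<i> * complex_of_real (\<Sum>\<alpha>\<in>UNIV. \<Sum>\<beta>\<in>UNIV.
      (1/2 * ginv g \<alpha> \<beta> p * (\<Sum>i\<in>UNIV. \<Sum>k\<in>UNIV. ginv g k i p * dd (Some \<alpha>) (g i k) p)
        + dd (Some \<alpha>) (ginv g \<alpha> \<beta>) p) * \<xi> $ \<beta>)"
    unfolding q1_def lndet_dd[OF tm p] by simp
  also have "\<dots> = - \<i> * complex_of_real (\<Sum>\<alpha>\<in>UNIV. \<Sum>\<beta>\<in>UNIV.
      (\<Sum>i\<in>UNIV. \<Sum>k\<in>UNIV. 1/2 * ginv g \<alpha> \<beta> p * (ginv g k i p * dd (Some \<alpha>) (g i k) p) * \<xi> $ \<beta>)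
        + dd (Some \<alpha>) (ginv g \<alpha> \<beta>) p * \<xi> $ \<beta>)"
    by (simp add: sum_distrib_left sum_distrib_right algebra_simps)
  also have "\<dots> = lv g Q1 p \<xi>"
    unfolding a by (simp add: sum.distrib algebra_simps)
  finally show ?thesis by simp
qed

lemma nq_pos: "p \<in> U \<Longrightarrow> \<xi> \<noteq> 0 \<Longrightarrow> nq g p \<xi> > 0"
  using q2_pos[OF tm] by (simp add: nq_def)

end


definition R0 :: "('n::{finite,linorder}) st list" where
  "R0 = shf 1 (scl (1/2) (concat (map (\<lambda>\<alpha>. lmul (dxi \<alpha> SQ) (scl (- \<i>) (dx (Some \<alpha>) SQ))) ul)
        @ scl (-1) Q1 @ scl (-1) (dx None SQ) @ lmul Elist SQ))"

definition R1 :: "('n::{finite,linorder}) st list" where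
  "R1 = scl (-1) SQ"

lemma good_R1: "good 0 0 R1"
  unfolding R1_def by (rule good_scl[OF good_SQ])

lemma good_R0: "good 1 0 (R0 :: ('n::{finite,linorder}) st list)"
proof -
  have a: "good 1 0 (lmul (dxi \<alpha> SQ) (scl (- \<i>) (dx (Some \<alpha>) SQ)))" for \<alpha> :: 'n
  proof -
    have d: "good (Suc 0) (0 + 1) (dx (Some \<alpha>) SQ)"
      using good_dx[OF good_SQ, of "Some \<alpha>"] by simp
    have "good (0 + Suc 0) (Suc 0 + (0 + 1)) (lmul (dxi \<alpha> SQ) (scl (- \<i>) (dx (Some \<alpha>) SQ)))"
      by (intro good_lmul good_dxi good_scl d good_SQ)
    then have "good 1 (Suc 0 + (0 + 1)) (lmul (dxi \<alpha> SQ) (scl (- \<i>) (dx (Some \<alpha>) SQ)))" by simp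
    then show ?thesis by (rule good_par) simp
  qed
  have b: "good 1 0 (dx None SQ :: 'n st list)"
    using good_dx[OF good_SQ, of None] by simp
  have c: "good 1 0 (lmul Elist SQ :: 'n st list)"
    using good_lmul[OF good_Elist good_SQ] by simp
  show ?thesis unfolding R0_def
    by (intro good_shf good_scl good_append good_concat a b c good_Q1)
qed

context
  fixes U :: "('n::{finite,linorder}) pt set" and g :: "'n metric"
  assumes tm: "tang_metric U g"
begin

lemma lv_R1: "lv g R1 p \<xi> = r1 g p \<xi>"
  by (simp add: R1_def lv_scl lv_SQ r1_def)

lemma lv_R0:
  assumes p: "p \<in> U" and \<xi>: "\<xi> \<noteq> 0"
  shows "lv g R0 p \<xi> = r0 g p \<xi>"
proof -
  have sqlv: "\<forall>q\<in>U. sq g q \<xi>' = lv g SQ q \<xi>'" for \<xi>' by (simp add: lv_SQ)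
  have n0: "nq g p \<xi> \<noteq> 0" using nq_pos[OF tm p \<xi>] by simp
  have e1: "pdxi \<alpha> (sq g) p \<xi> = lv g (dxi \<alpha> SQ) p \<xi>" for \<alpha>
    by (rule pdxi_lv[OF tm p \<xi>]) (simp add: lv_SQ)
  have e2: "Dx \<alpha> (sq g) p \<xi> = lv g (scl (- \<i>) (dx (Some \<alpha>) SQ)) p \<xi>" for \<alpha>
    unfolding Dx_def pdx_def lv_scl using dd_lv[OF tm p \<xi>, where f="sq g" and R=SQ, OF sqlv[of \<xi>]] by simp
  have e3: "pdn (sq g) p \<xi> = lv g (dx None SQ) p \<xi>"
    unfolding pdn_def using dd_lv[OF tm p \<xi>, where f="sq g" and R=SQ, OF sqlv[of \<xi>]] by simp
  have sqn: "sq g p \<xi> = complex_of_real (nq g p \<xi>)" by (simp add: sq_def nq_def)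
  have "lv g R0 p \<xi> = complex_of_real (nq g p \<xi> powi (- 1)) * (1/2 *
      ((\<Sum>\<alpha>\<leftarrow>ul. pdxi \<alpha> (sq g) p \<xi> * Dx \<alpha> (sq g) p \<xi>) - q1 g p \<xi> - pdn (sq g) p \<xi>
        + complex_of_real (Efun g p) * sq g p \<xi>))"
    unfolding R0_def lv_shf[OF n0] lv_scl lv_append lv_concat lv_lmul[OF n0]
    by (simp add: e1 e2 e3 lv_Q1[OF tm p] lv_Elist lv_SQ lv_scl)
  also have "\<dots> = r0 g p \<xi>"
    unfolding r0_def sum_ul sqn using n0 by (simp add: power_int_minus1_right divide_simps)
  finally show ?thesis .
qed

end


definition DXI :: "('n::{finite,linorder} \<Rightarrow> nat) \<Rightarrow> 'n st list \<Rightarrow> 'n st list" where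
  "DXI K R = fold dxi (mi_list K) R"

definition dxD :: "'n::{finite,linorder} \<Rightarrow> 'n st list \<Rightarrow> 'n st list" where
  "dxD \<alpha> R = scl (- \<i>) (dx (Some \<alpha>) R)"

definition DXK :: "('n::{finite,linorder} \<Rightarrow> nat) \<Rightarrow> 'n st list \<Rightarrow> 'n st list" where
  "DXK K R = fold dxD (mi_list K) R"

lemma good_fold_dxi: "good w \<pi> R \<Longrightarrow> good w (\<pi> + length xs) (fold dxi xs R)"
proof (induction xs arbitrary: \<pi> R)
  case Nil then show ?case by simp
next
  case (Cons x xs)
  have "good w (Suc \<pi> + length xs) (fold dxi xs (dxi x R))"
    using Cons.IH[OF good_dxi[OF Cons.prems]] .
  then show ?case by simp
qed

lemma good_fold_dxD: "good w \<pi> R \<Longrightarrow> good (w + length xs) (\<pi> + length xs) (fold dxD xs R)"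
proof (induction xs arbitrary: w \<pi> R)
  case Nil then show ?case by simp
next
  case (Cons x xs)
  have "good (Suc w) (\<pi> + 1) (dxD x R)"
    unfolding dxD_def using good_scl[OF good_dx[OF Cons.prems, of "Some x"]] by simp
  then have "good (Suc w + length xs) (\<pi> + 1 + length xs) (fold dxD xs (dxD x R))"
    by (rule Cons.IH)
  then show ?case by simp
qed

definition Kset :: "int \<Rightarrow> ('n::finite \<Rightarrow> nat) set" where
  "Kset n = {K. int (mi_abs K) = n}"

lemma finite_Kset: "finite (Kset n :: ('n::{finite,linorder} \<Rightarrow> nat) set)"
proof -
  have "Kset n \<subseteq> {K. \<forall>x. (x \<in> UNIV \<longrightarrow> K x \<in> {..nat n}) \<and> (x \<notin> UNIV \<longrightarrow> K x = 0)}"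
  proof
    fix K assume "K \<in> Kset n"
    then have h: "int (mi_abs K) = n" by (simp add: Kset_def)
    have "K x \<le> mi_abs K" for x unfolding mi_abs_def by (rule member_le_sum) auto
    moreover have "nat n = mi_abs K" using h by auto
    ultimately have "K x \<le> nat n" for x by simp
    then show "K \<in> {K. \<forall>x. (x \<in> UNIV \<longrightarrow> K x \<in> {..nat n}) \<and> (x \<notin> UNIV \<longrightarrow> K x = 0)}"
      by simp
  qed
  moreover have "finite {K :: 'n::{finite,linorder} \<Rightarrow> nat. \<forall>x. (x \<in> UNIV \<longrightarrow> K x \<in> {..nat n}) \<and> (x \<notin> UNIV \<longrightarrow> K x = 0)}"
    by (rule finite_set_of_finite_funs) simp_all
  ultimately show ?thesis by (rule finite_subset)
qed

definition klist :: "int \<Rightarrow> ('n::{finite,linorder} \<Rightarrow> nat) list" where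
  "klist n = (SOME xs. distinct xs \<and> set xs = Kset n)"

lemma klist: "distinct (klist n :: ('n::{finite,linorder} \<Rightarrow> nat) list) \<and> set (klist n :: ('n \<Rightarrow> nat) list) = Kset n"
proof -
  obtain xs :: "('n \<Rightarrow> nat) list" where "set xs = Kset n \<and> distinct xs"
    using finite_distinct_list[OF finite_Kset] by blast
  then have "\<exists>xs :: ('n \<Rightarrow> nat) list. distinct xs \<and> set xs = Kset n" by blast
  then show ?thesis unfolding klist_def by (rule someI_ex)
qed

definition RS :: "nat \<Rightarrow> ('n::{finite,linorder}) st list list \<Rightarrow> 'n st list" where
  "RS m L = shf 1 (scl (1/2) (concat (map (\<lambda>j. concat (map (\<lambda>k. concat (map (\<lambda>K.
       scl (1 / of_nat (mi_fact K)) (lmul (DXI K (L ! nat (1 - j))) (DXK K (L ! nat (1 - k)))))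
       (klist (j + k + int m)))) [- int m..1])) [- int m..1])
     @ dx None (L ! (m + 1)) @ scl (-1) (lmul Elist (L ! (m + 1)))))"

fun RepL :: "nat \<Rightarrow> ('n::{finite,linorder}) st list list" where
  "RepL 0 = [R1]"
| "RepL (Suc 0) = [R1, R0]"
| "RepL (Suc (Suc m)) = RepL (Suc m) @ [RS m (RepL (Suc m))]"

lemma good_weq: "good w \<pi> R \<Longrightarrow> w = w' \<Longrightarrow> good w' \<pi> R" by simp

lemma good_RS:
  assumes L: "\<forall>i\<le>Suc m. good i 0 (L ! i)"
  shows "good (Suc (Suc m)) 0 (RS m L)"
proof -
  have A: "good (Suc (Suc m)) 0 (scl (1 / of_nat (mi_fact K)) (lmul (DXI K (L ! nat (1 - j))) (DXK K (L ! nat (1 - k)))))"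
    if j: "j \<in> set [- int m..1]" and k: "k \<in> set [- int m..1]" and K: "K \<in> set (klist (j + k + int m))" for j k K
  proof -
    have jr: "- int m \<le> j" "j \<le> 1" using j by auto
    have kr: "- int m \<le> k" "k \<le> 1" using k by auto
    have Ka: "int (mi_abs K) = j + k + int m" using K klist by (auto simp: Kset_def)
    have gj: "good (nat (1 - j)) 0 (L ! nat (1 - j))" using L jr by auto
    have gk: "good (nat (1 - k)) 0 (L ! nat (1 - k))" using L kr by auto
    have "good (nat (1 - j) + (nat (1 - k) + mi_abs K)) ((0 + mi_abs K) + (0 + mi_abs K))
        (lmul (DXI K (L ! nat (1 - j))) (DXK K (L ! nat (1 - k))))"
      unfolding DXI_def DXK_def
      using good_lmul[OF good_fold_dxi[OF gj, of "mi_list K"] good_fold_dxD[OF gk, of "mi_list K"]] by (simp add: length_mi_list)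
    moreover have "nat (1 - j) + (nat (1 - k) + mi_abs K) = Suc (Suc m)" using jr kr Ka by linarith
    ultimately have "good (Suc (Suc m)) ((0 + mi_abs K) + (0 + mi_abs K))
        (lmul (DXI K (L ! nat (1 - j))) (DXK K (L ! nat (1 - k))))" by simp
    then have "good (Suc (Suc m)) 0 (lmul (DXI K (L ! nat (1 - j))) (DXK K (L ! nat (1 - k))))"
      by (rule good_par) simp
    then show ?thesis by (rule good_scl)
  qed
  have B: "good (Suc (Suc m)) 0 (dx None (L ! (m + 1)))"
    using good_dx[of "Suc m" 0 "L ! Suc m" None] L by simp
  have C: "good (Suc (Suc m)) 0 (scl (-1) (lmul Elist (L ! (m + 1))))"
    using good_scl[OF good_lmul[OF good_Elist, of "Suc m" 0 "L ! Suc m"]] L by simp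
  show ?thesis unfolding RS_def
    by (intro good_shf good_scl good_append good_concat A B C) auto
qed

lemma RepL_good: "length (RepL n :: ('n::{finite,linorder}) st list list) = Suc n \<and> (\<forall>i\<le>n. good i 0 (RepL n ! i :: 'n st list))"
proof (induction n rule: RepL.induct)
  case 1
  then show ?case using good_R1 by simp
next
  case 2
  show ?case using good_R1 good_R0 by (auto simp: le_Suc_eq)
next
  case (3 m)
  let ?L = "RepL (Suc m) :: 'n st list list"
  have gRS: "good (Suc (Suc m)) 0 (RS m ?L)" using good_RS 3 by blast
  show ?case
  proof (intro conjI allI impI)
    show "length (RepL (Suc (Suc m)) :: 'n st list list) = Suc (Suc (Suc m))" using 3 by simp
  next
    fix i assume i: "i \<le> Suc (Suc m)"
    show "good i 0 (RepL (Suc (Suc m)) ! i :: 'n st list)"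
    proof (cases "i \<le> Suc m")
      case True
      then show ?thesis using 3 by (simp add: nth_append)
    next
      case False
      then have "i = Suc (Suc m)" using i by simp
      then show ?thesis using 3 gRS by (simp add: nth_append)
    qed
  qed
qed

context
  fixes U :: "('n::{finite,linorder}) pt set" and g :: "'n metric"
  assumes tm: "tang_metric U g"
begin

lemma lv_fold_dxi:
  assumes "\<forall>p\<in>U. \<forall>\<xi>. \<xi> \<noteq> 0 \<longrightarrow> f p \<xi> = lv g R p \<xi>"
  shows "\<forall>p\<in>U. \<forall>\<xi>. \<xi> \<noteq> 0 \<longrightarrow> fold pdxi xs f p \<xi> = lv g (fold dxi xs R) p \<xi>"
  using assms
proof (induction xs arbitrary: f R)
  case Nil then show ?case by simp
next
  case (Cons x xs)
  have "\<forall>p\<in>U. \<forall>\<xi>. \<xi> \<noteq> 0 \<longrightarrow> pdxi x f p \<xi> = lv g (dxi x R) p \<xi>"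
    using pdxi_lv[OF tm] Cons.prems by blast
  then show ?case using Cons.IH by simp
qed

lemma lv_fold_dxD:
  assumes "\<forall>p\<in>U. \<forall>\<xi>. \<xi> \<noteq> 0 \<longrightarrow> f p \<xi> = lv g R p \<xi>"
  shows "\<forall>p\<in>U. \<forall>\<xi>. \<xi> \<noteq> 0 \<longrightarrow> fold Dx xs f p \<xi> = lv g (fold dxD xs R) p \<xi>"
  using assms
proof (induction xs arbitrary: f R)
  case Nil then show ?case by simp
next
  case (Cons x xs)
  have "\<forall>p\<in>U. \<forall>\<xi>. \<xi> \<noteq> 0 \<longrightarrow> Dx x f p \<xi> = lv g (dxD x R) p \<xi>"
  proof (intro ballI allI impI)
    fix p \<xi> assume p: "p \<in> U" and \<xi>: "(\<xi>::(real, 'n) vec) \<noteq> 0"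
    have h: "\<forall>q\<in>U. f q \<xi> = lv g R q \<xi>" using Cons.prems \<xi> by blast
    show "Dx x f p \<xi> = lv g (dxD x R) p \<xi>"
      unfolding Dx_def pdx_def dxD_def lv_scl using dd_lv[OF tm p \<xi>, where f=f and R=R, OF h] by simp
  qed
  then show ?case using Cons.IH by simp
qed

lemma rlist_len: "length (rlist g n) = Suc n"
  by (induction g n rule: rlist.induct) auto

lemma rstep_val:
  assumes hyp: "\<forall>i\<le>Suc m. \<forall>p\<in>U. \<forall>\<xi>. \<xi> \<noteq> 0 \<longrightarrow> (L ! i) p \<xi> = lv g (RL ! i) p \<xi>"
    and p: "p \<in> U" and \<xi>: "\<xi> \<noteq> 0"
  shows "rstep g m L p \<xi> = lv g (RS m RL) p \<xi>"
proof -
  have n0: "nq g p \<xi> \<noteq> 0" using nq_pos[OF tm p \<xi>] by simp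
  have hj: "\<forall>p\<in>U. \<forall>\<xi>. \<xi> \<noteq> 0 \<longrightarrow> (L ! nat (1 - j)) p \<xi> = lv g (RL ! nat (1 - j)) p \<xi>"
    if "j \<in> {- int m..1}" for j
    using hyp that by auto
  have T: "(1 / of_nat (mi_fact K)) * pdxi_K K (L ! nat (1 - j)) p \<xi> * Dx_K K (L ! nat (1 - k)) p \<xi>
     = lv g (scl (1 / of_nat (mi_fact K)) (lmul (DXI K (RL ! nat (1 - j))) (DXK K (RL ! nat (1 - k))))) p \<xi>"
    if j: "j \<in> {- int m..1}" and k: "k \<in> {- int m..1}" for j k K
  proof -
    have a: "pdxi_K K (L ! nat (1 - j)) p \<xi> = lv g (DXI K (RL ! nat (1 - j))) p \<xi>"
      unfolding pdxi_K_def DXI_def using lv_fold_dxi[OF hj[OF j]] p \<xi> by blast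
    have b: "Dx_K K (L ! nat (1 - k)) p \<xi> = lv g (DXK K (RL ! nat (1 - k))) p \<xi>"
      unfolding Dx_K_def DXK_def using lv_fold_dxD[OF hj[OF k]] p \<xi> by blast
    show ?thesis by (simp add: a b lv_scl lv_lmul[OF n0] mult.assoc)
  qed
  have S: "lv g (concat (map (\<lambda>j. concat (map (\<lambda>k. concat (map (\<lambda>K.
       scl (1 / of_nat (mi_fact K)) (lmul (DXI K (RL ! nat (1 - j))) (DXK K (RL ! nat (1 - k)))))
       (klist (j + k + int m)))) [- int m..1])) [- int m..1])) p \<xi>
     = (\<Sum>j\<in>{- int m..1}. \<Sum>k\<in>{- int m..1}. \<Sum>K\<in>{K :: 'n \<Rightarrow> nat. int (mi_abs K) = j + k + int m}.
         (1 / of_nat (mi_fact K)) * pdxi_K K (L ! nat (1 - j)) p \<xi> * Dx_K K (L ! nat (1 - k)) p \<xi>)"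
  proof -
    have k1: "distinct (klist n :: ('n \<Rightarrow> nat) list)" and k2: "set (klist n :: ('n \<Rightarrow> nat) list) = Kset n" for n
      using klist by blast+
    show ?thesis
      unfolding lv_concat sum_list_distinct_conv_sum_set[OF distinct_upto] set_upto
        sum_list_distinct_conv_sum_set[OF k1] k2 Kset_def
      by (intro sum.cong refl) (simp only: T)
  qed
  have hm: "\<forall>q\<in>U. (L ! (m + 1)) q \<xi> = lv g (RL ! (m + 1)) q \<xi>" using hyp \<xi> by auto
  have P: "pdn (L ! (m + 1)) p \<xi> = lv g (dx None (RL ! (m + 1))) p \<xi>"
    unfolding pdn_def using dd_lv[OF tm p \<xi>, where f="L ! (m + 1)" and R="RL ! (m + 1)", OF hm] by simp
  have Lm: "(L ! (m + 1)) p \<xi> = lv g (RL ! (m + 1)) p \<xi>" using hm p by blast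
  have sqn: "sq g p \<xi> = complex_of_real (nq g p \<xi>)" by (simp add: sq_def nq_def)
  define A where "A = lv g (concat (map (\<lambda>j. concat (map (\<lambda>k. concat (map (\<lambda>K.
       scl (1 / of_nat (mi_fact K)) (lmul (DXI K (RL ! nat (1 - j))) (DXK K (RL ! nat (1 - k)))))
       (klist (j + k + int m)))) [- int m..1])) [- int m..1])) p \<xi>"
  have Lhs: "rstep g m L p \<xi> = (1 / (2 * complex_of_real (nq g p \<xi>))) *
      (A + lv g (dx None (RL ! (m + 1))) p \<xi> - complex_of_real (Efun g p) * lv g (RL ! (m + 1)) p \<xi>)"
    unfolding rstep_def A_def S P Lm sqn ..
  have Rhs: "lv g (RS m RL) p \<xi> = complex_of_real (nq g p \<xi> powi (-1)) * ((1/2) *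
      (A + (lv g (dx None (RL ! (m + 1))) p \<xi> + (-1) * (complex_of_real (Efun g p) * lv g (RL ! (m + 1)) p \<xi>))))"
    unfolding RS_def A_def lv_shf[OF n0] lv_scl lv_append lv_lmul[OF n0] lv_Elist ..
  have alg: "(1 / (2 * complex_of_real N)) * (a + b - e * c) = complex_of_real (N powi (-1)) * ((1/2) * (a + (b + (-1) * (e * c))))"
    if "N \<noteq> 0" for N :: real and a b c e :: complex
    using that by (simp add: power_int_minus1_right field_simps)
  show ?thesis unfolding Lhs Rhs by (rule alg[OF n0])
qed

lemma rlist_val:
  "\<forall>i\<le>n. \<forall>p\<in>U. \<forall>\<xi>. \<xi> \<noteq> 0 \<longrightarrow> (rlist g n ! i) p \<xi> = lv g (RepL n ! i) p \<xi>"
proof (induction n rule: RepL.induct)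
  case 1
  then show ?case by (simp add: lv_R1[OF tm])
next
  case 2
  show ?case using lv_R1[OF tm] lv_R0[OF tm] by (auto simp: le_Suc_eq)
next
  case (3 m)
  have lL: "length (rlist g (Suc m)) = Suc (Suc m)" by (rule rlist_len)
  have lR: "length (RepL (Suc m) :: 'n st list list) = Suc (Suc m)" using RepL_good by blast
  show ?case
  proof (intro allI impI ballI)
    fix i p \<xi> assume i: "i \<le> Suc (Suc m)" and p: "p \<in> U" and \<xi>: "(\<xi>::(real, 'n) vec) \<noteq> 0"
    show "(rlist g (Suc (Suc m)) ! i) p \<xi> = lv g (RepL (Suc (Suc m)) ! i) p \<xi>"
    proof (cases "i \<le> Suc m")
      case True
      then show ?thesis using 3 p \<xi> lL lR by (simp add: nth_append)
    next
      case False
      then have ii: "i = Suc (Suc m)" using i by simp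
      show ?thesis using rstep_val[OF 3(1) p \<xi>] lL lR by (simp add: ii nth_append)
    qed
  qed
qed

end

definition conv :: "('n::{finite,linorder}) st list \<Rightarrow> 'n trm list" where
  "conv R = map (\<lambda>(k, M). (k, [M])) R"

lemma rep_val_conv: "rep_val g (conv R) p \<xi> = lv g R p \<xi>"
proof (induction R)
  case Nil then show ?case by (simp add: conv_def rep_val_def lv_def)
next
  case (Cons t R)
  obtain k c as e where t: "t = (k, (c, as, e))" by (cases t) auto
  have "trm_val g (k, [(c, as, e)]) p \<xi> = sv g (k, (c, as, e)) p \<xi>"
    by (simp add: nq_def aval_def xpow_def mult_ac)
  then show ?case using Cons by (simp add: conv_def rep_val_def lv_def t)
qed

lemma graded_conv:
  assumes "good w 0 R"
  shows "\<forall>t\<in>set (conv R). graded_trm (int w) t"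
proof
  fix t assume "t \<in> set (conv R)"
  then obtain k M where kM: "(k, M) \<in> set R" "t = (k, [M])" by (auto simp: conv_def)
  have h: "mnm_w M = w" "even (mnm_w M + mnm_nw M + mnm_deg M + 0)"
    using assms kM(1) unfolding good_def by (auto simp del: mnm_w.simps mnm_nw.simps mnm_deg.simps)
  have "even (mnm_w M mod 2 + mnm_nw M mod 2 + mnm_deg M mod 2)"
    using h(2) by presburger
  then show "graded_trm (int w) t" using h(1) kM(2) by auto
qed

theorem lemma3p1:
  fixes m :: int
  assumes "m \<ge> -1"
  shows "(\<exists>R :: ('n::{finite,linorder}) trm list. (\<forall>t\<in>set R. graded_trm (m + 1) t) \<and>
            (\<forall>U g. tang_metric U g \<longrightarrow>
               (\<forall>p\<in>U. \<forall>\<xi>. \<xi> \<noteq> 0 \<longrightarrow> rhat g (- m) p \<xi> = rep_val g R p \<xi>)))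
       \<and> (\<exists>R :: 'n trm list. (\<forall>t\<in>set R. graded_trm (m + 1) t) \<and>
            (\<forall>U g. tang_metric U g \<longrightarrow>
               (\<forall>x \<xi>. (x, 0) \<in> U \<longrightarrow> \<xi> \<noteq> 0 \<longrightarrow>
                  - rhat g (- m) (x, 0) \<xi> = rep_val g R (x, 0) \<xi>)))"
proof -
  define n where "n = nat (m + 1)"
  have mn: "m + 1 = int n" using assms by (simp add: n_def)
  have rh: "rhat g (- m) = rlist g n ! n" for g :: "'n metric"
    by (simp add: rhat_def n_def add.commute)
  have gd: "good n 0 (RepL n ! n :: 'n st list)" using RepL_good by blast
  have val: "rhat g (- m) p \<xi> = lv g (RepL n ! n) p \<xi>"
    if "tang_metric U g" "p \<in> U" "\<xi> \<noteq> 0" for U g p and \<xi> :: "(real, 'n) vec"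
    using rlist_val[OF that(1), of n] that(2,3) by (simp add: rh)
  show ?thesis
  proof (intro conjI)
    show "\<exists>R :: 'n trm list. (\<forall>t\<in>set R. graded_trm (m + 1) t) \<and>
            (\<forall>U g. tang_metric U g \<longrightarrow>
               (\<forall>p\<in>U. \<forall>\<xi>. \<xi> \<noteq> 0 \<longrightarrow> rhat g (- m) p \<xi> = rep_val g R p \<xi>))"
      by (rule exI[of _ "conv (RepL n ! n)"])
         (simp add: mn graded_conv[OF gd] rep_val_conv val)
    show "\<exists>R :: 'n trm list. (\<forall>t\<in>set R. graded_trm (m + 1) t) \<and>
            (\<forall>U g. tang_metric U g \<longrightarrow>
               (\<forall>x \<xi>. (x, 0) \<in> U \<longrightarrow> \<xi> \<noteq> 0 \<longrightarrow>
                  - rhat g (- m) (x, 0) \<xi> = rep_val g R (x, 0) \<xi>))"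
      by (rule exI[of _ "conv (scl (-1) (RepL n ! n))"])
         (simp add: mn graded_conv[OF good_scl[OF gd]] rep_val_conv lv_scl val)
  qed
qed


end
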